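(* Let $G$ be a triangulation on $n$ vertices. Every independent set $I$ of vertices of $G$, each of degree at least six in $G$, satisfies $|I|\le (n-2)/3$.
   Context: Graphs are finite, undirected and simple. A triangulation is a planar graph embedded in the plane such that every face, including the outer face, is bounded by a cycle on three edges. A set of vertices is independent if no two of its vertices are adjacent. *)

theory Defs
  imports "HOL-Analysis.Analysis"
begin

definition simple_graph :: "'a set \<Rightarrow> 'a set set \<Rightarrow> bool" where
  "simple_graph V E \<longleftrightarrow> finite V \<and>
     (\<forall>e\<in>E. \<exists>u v. u \<in> V \<and> v \<in> V \<and> u \<noteq> v \<and> e = {u, v})"

definition adjacent :: "'a set set \<Rightarrow> 'a \<Rightarrow> 'a \<Rightarrow> bool" where
  "adjacent E u v \<longleftrightarrow> {u, v} \<in> E"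

definition degree :: "'a set \<Rightarrow> 'a set set \<Rightarrow> 'a \<Rightarrow> nat" where
  "degree V E v = card {u \<in> V. adjacent E v u}"

definition independent_set :: "'a set set \<Rightarrow> 'a set \<Rightarrow> bool" where
  "independent_set E I \<longleftrightarrow> (\<forall>u\<in>I. \<forall>v\<in>I. \<not> adjacent E u v)"

definition plane_embedding ::
  "'a set \<Rightarrow> 'a set set \<Rightarrow> ('a \<Rightarrow> complex) \<Rightarrow> ('a set \<Rightarrow> real \<Rightarrow> complex) \<Rightarrow> bool" where
  "plane_embedding V E pos arc_of \<longleftrightarrow>
     inj_on pos V \<and>
     (\<forall>u\<in>V. \<forall>v\<in>V. {u, v} \<in> E \<longrightarrow>
        arc (arc_of {u, v}) \<and>
        {pathstart (arc_of {u, v}), pathfinish (arc_of {u, v})} = {pos u, pos v} \<and>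
        path_image (arc_of {u, v}) \<inter> pos ` V = {pos u, pos v}) \<and>
     (\<forall>e\<in>E. \<forall>e'\<in>E. e \<noteq> e' \<longrightarrow>
        path_image (arc_of e) \<inter> path_image (arc_of e') \<subseteq> pos ` (e \<inter> e'))"

definition drawing ::
  "'a set \<Rightarrow> 'a set set \<Rightarrow> ('a \<Rightarrow> complex) \<Rightarrow> ('a set \<Rightarrow> real \<Rightarrow> complex) \<Rightarrow> complex set" where
  "drawing V E pos arc_of = pos ` V \<union> (\<Union>e\<in>E. path_image (arc_of e))"

definition faces ::
  "'a set \<Rightarrow> 'a set set \<Rightarrow> ('a \<Rightarrow> complex) \<Rightarrow> ('a set \<Rightarrow> real \<Rightarrow> complex) \<Rightarrow> complex set set" where
  "faces V E pos arc_of = components (- drawing V E pos arc_of)"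

definition triangulation :: "'a set \<Rightarrow> 'a set set \<Rightarrow> bool" where
  "triangulation V E \<longleftrightarrow> simple_graph V E \<and>
     (\<exists>pos arc_of. plane_embedding V E pos arc_of \<and>
        (\<forall>F\<in>faces V E pos arc_of. \<exists>a b c.
           a \<noteq> b \<and> b \<noteq> c \<and> a \<noteq> c \<and>
           {a, b} \<in> E \<and> {b, c} \<in> E \<and> {a, c} \<in> E \<and>
           frontier F = path_image (arc_of {a, b}) \<union> path_image (arc_of {b, c})
                          \<union> path_image (arc_of {a, c})))"

end

theory Submission
  imports Defs "HOL-Homology.Invariance_of_Domain"
begin

lemma conn_sub: "connected X \<Longrightarrow> X \<inter> frontier Y = {} \<Longrightarrow> X \<inter> Y \<noteq> {} \<Longrightarrow> X \<subseteq> Y"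
  using connected_Int_frontier[of X Y] by blast

lemma arc_interior_empty:
  fixes g :: "real \<Rightarrow> complex"
  assumes "arc g" shows "interior (path_image g) = {}"
  by (rule empty_interior_lowdim_gen[where T="{0..1::real}"]) (auto intro: homeomorphic_arc_image_interval assms)

definition jordan_set :: "complex set \<Rightarrow> bool" where
  "jordan_set J \<longleftrightarrow> (\<exists>c. simple_path c \<and> pathfinish c = pathstart c \<and> path_image c = J)"

lemma jordan_props:
  assumes "jordan_set J"
  shows "inside J \<noteq> {}" "open (inside J)" "connected (inside J)"
    "outside J \<noteq> {}" "open (outside J)" "connected (outside J)"
    "bounded (inside J)" "inside J \<inter> outside J = {}" "inside J \<union> outside J = - J"
    "frontier (inside J) = J" "frontier (outside J) = J" "compact J"
    "closure (inside J) = inside J \<union> J" "- closure (inside J) = outside J"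
proof -
  obtain c where c: "simple_path c" "pathfinish c = pathstart c" "path_image c = J"
    using assms unfolding jordan_set_def by blast
  note JJ = Jordan_inside_outside[OF c(1,2), unfolded c(3)]
  show "inside J \<noteq> {}" "open (inside J)" "connected (inside J)"
    "outside J \<noteq> {}" "open (outside J)" "connected (outside J)"
    "bounded (inside J)" "inside J \<inter> outside J = {}" "inside J \<union> outside J = - J"
    "frontier (inside J) = J" "frontier (outside J) = J"
    using JJ by auto
  show "compact J" using c compact_simple_path_image by blast
  show cl: "closure (inside J) = inside J \<union> J" using JJ closure_Un_frontier by metis
  show "- closure (inside J) = outside J" unfolding cl using JJ by blast
qed

lemma jordan_two_arcs:
  fixes c1 c2 :: "real \<Rightarrow> complex"
  assumes "arc c1" "arc c2" "pathstart c1 = a" "pathfinish c1 = b"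
    "pathstart c2 = a" "pathfinish c2 = b" "path_image c1 \<inter> path_image c2 \<subseteq> {a,b}"
  shows "jordan_set (path_image c1 \<union> path_image c2)"
  unfolding jordan_set_def
  apply (rule exI[of _ "c1 +++ reversepath c2"])
  using assms by (auto simp: simple_path_join_loop_eq arc_reversepath path_image_join)

lemma open_closure_meet:
  assumes "open Ob" "z \<in> Ob" "z \<in> closure X" shows "X \<inter> Ob \<noteq> {}"
  using assms by (meson closure_iff_nhds_not_empty disjoint_iff_not_equal subsetI)

lemma push_out:
  assumes "X \<subseteq> - J" "connected X" "z \<in> closure X" "z \<in> Ob" "open Ob" "frontier Ob = J"
  shows "X \<subseteq> Ob"
  apply (rule conn_sub[OF assms(2)])
  using assms open_closure_meet[OF assms(5,4,3)] by auto

lemma middle_ex: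
  fixes c0 c1 c2 :: "real \<Rightarrow> complex"
  assumes arcs: "arc c0" "arc c1" "arc c2"
    and st: "pathstart c0 = a" "pathstart c1 = a" "pathstart c2 = a"
    and fi: "pathfinish c0 = b" "pathfinish c1 = b" "pathfinish c2 = b"
    and ab: "a \<noteq> b"
    and i01: "path_image c0 \<inter> path_image c1 = {a,b}"
    and i02: "path_image c0 \<inter> path_image c2 = {a,b}"
    and i12: "path_image c1 \<inter> path_image c2 = {a,b}"
  shows "path_image c0 \<inter> inside (path_image c1 \<union> path_image c2) \<noteq> {} \<or>
         path_image c1 \<inter> inside (path_image c0 \<union> path_image c2) \<noteq> {} \<or>
         path_image c2 \<inter> inside (path_image c0 \<union> path_image c1) \<noteq> {}"
proof (rule ccontr)
  let ?T0 = "path_image c0" let ?T1 = "path_image c1" let ?T2 = "path_image c2"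
  assume "\<not> ?thesis"
  then have H0: "?T0 \<inter> inside (?T1 \<union> ?T2) = {}"
    and H1: "?T1 \<inter> inside (?T0 \<union> ?T2) = {}"
    and H2: "?T2 \<inter> inside (?T0 \<union> ?T1) = {}" by auto
  have J01: "jordan_set (?T0 \<union> ?T1)" by (rule jordan_two_arcs[OF arcs(1,2) st(1) fi(1) st(2) fi(2)]) (use i01 in auto)
  have J02: "jordan_set (?T0 \<union> ?T2)" by (rule jordan_two_arcs[OF arcs(1,3) st(1) fi(1) st(3) fi(3)]) (use i02 in auto)
  have J12: "jordan_set (?T1 \<union> ?T2)" by (rule jordan_two_arcs[OF arcs(2,3) st(2) fi(2) st(3) fi(3)]) (use i12 in auto)
  note P01 = jordan_props[OF J01] and P02 = jordan_props[OF J02] and P12 = jordan_props[OF J12]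
  have "?T1 - {a, b} \<noteq> {}"
    using nonempty_simple_path_endless[OF arc_imp_simple_path[OF arcs(2)]] st fi by simp
  then obtain z1 where z1: "z1 \<in> ?T1" "z1 \<noteq> a" "z1 \<noteq> b" by blast
  have "?T2 - {a, b} \<noteq> {}"
    using nonempty_simple_path_endless[OF arc_imp_simple_path[OF arcs(3)]] st fi by simp
  then obtain z2 where z2: "z2 \<in> ?T2" "z2 \<noteq> a" "z2 \<noteq> b" by blast
  have z2o: "z2 \<in> outside (?T0 \<union> ?T1)"
  proof -
    have "z2 \<notin> ?T0 \<union> ?T1" using z2 i02 i12 by blast
    then have "z2 \<in> inside (?T0 \<union> ?T1) \<union> outside (?T0 \<union> ?T1)" using P01(9) by blast
    then show ?thesis using H2 z2(1) by blast
  qed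
  have z1o: "z1 \<in> outside (?T0 \<union> ?T2)"
  proof -
    have "z1 \<notin> ?T0 \<union> ?T2" using z1 i01 i12 by blast
    then have "z1 \<in> inside (?T0 \<union> ?T2) \<union> outside (?T0 \<union> ?T2)" using P02(9) by blast
    then show ?thesis using H1 z1(1) by blast
  qed
  let ?U = "inside (?T1 \<union> ?T2)"
  have U01: "?U \<subseteq> outside (?T0 \<union> ?T1)"
  proof (rule push_out[of _ "?T0 \<union> ?T1" z2])
    show "?U \<subseteq> - (?T0 \<union> ?T1)" using H0 inside_no_overlap[of "?T1 \<union> ?T2"] by blast
    show "z2 \<in> closure ?U" using z2 P12(13) by blast
  qed (use P12 P01 z2o in auto)
  have U02: "?U \<subseteq> outside (?T0 \<union> ?T2)"
  proof (rule push_out[of _ "?T0 \<union> ?T2" z1])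
    show "?U \<subseteq> - (?T0 \<union> ?T2)" using H0 inside_no_overlap[of "?T1 \<union> ?T2"] by blast
    show "z1 \<in> closure ?U" using z1 P12(13) by blast
  qed (use P12 P02 z1o in auto)
  have I01: "inside (?T0 \<union> ?T1) \<subseteq> outside (?T0 \<union> ?T2)"
  proof (rule push_out[of _ "?T0 \<union> ?T2" z1])
    show "inside (?T0 \<union> ?T1) \<subseteq> - (?T0 \<union> ?T2)" using H2 inside_no_overlap[of "?T0 \<union> ?T1"] by blast
    show "z1 \<in> closure (inside (?T0 \<union> ?T1))" using z1 P01(13) by blast
  qed (use P01 P02 z1o in auto)
  define A where "A = closure (inside (?T0 \<union> ?T1))"
  define B where "B = closure (inside (?T0 \<union> ?T2))"
  have cA: "compact A" unfolding A_def using P01(7) by (simp add: compact_closure)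
  have cB: "closed B" unfolding B_def by simp
  have a0: "a \<in> ?T0" "b \<in> ?T0" using st fi by auto
  have AB: "A \<inter> B = ?T0"
    unfolding A_def B_def P01(13) P02(13)
  proof -
    have f1: "inside (?T0 \<union> ?T1) \<inter> inside (?T0 \<union> ?T2) = {}" using I01 P02(8) by blast
    have f2: "inside (?T0 \<union> ?T1) \<inter> ?T0 = {}" "inside (?T0 \<union> ?T2) \<inter> ?T0 = {}"
      using inside_no_overlap[of "?T0 \<union> ?T1"] inside_no_overlap[of "?T0 \<union> ?T2"] by blast+
    have f3: "?T1 \<inter> ?T2 \<subseteq> ?T0" using i12 a0 by auto
    show "(inside (?T0 \<union> ?T1) \<union> (?T0 \<union> ?T1)) \<inter> (inside (?T0 \<union> ?T2) \<union> (?T0 \<union> ?T2)) = ?T0"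
      using f1 f2 f3 H1 H2 by blast
  qed
  have "connected (- (A \<union> B))"
  proof (rule Janiszewski_connected[OF cA cB])
    show "connected (A \<inter> B)" unfolding AB by (simp add: connected_path_image arcs(1) arc_imp_path)
    show "connected (- A)" unfolding A_def P01(14) by (rule P01(6))
    show "connected (- B)" unfolding B_def P02(14) by (rule P02(6))
  qed
  moreover have "- (A \<union> B) \<inter> frontier ?U = {}"
    unfolding P12(10) A_def B_def P01(13) P02(13) by blast
  moreover have "- (A \<union> B) \<inter> ?U \<noteq> {}"
    using U01 U02 P12(1) unfolding A_def B_def P01(14)[symmetric] P02(14)[symmetric] by blast
  ultimately have "- (A \<union> B) \<subseteq> ?U" by (rule conn_sub)
  then have "UNIV \<subseteq> ?U \<union> A \<union> B" by blast
  moreover have "bounded (?U \<union> A \<union> B)"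
    using P12(7) cA cB B_def P02(7) by (simp add: compact_imp_bounded)
  ultimately show False using not_bounded_UNIV bounded_subset by blast
qed

lemma set_aux: "A \<union> B = - S \<Longrightarrow> B \<inter> T = {} \<Longrightarrow> (A - T) \<union> B = - (T \<union> S)"
  by blast

lemma theta_one:
  fixes c c1 c2 :: "real \<Rightarrow> complex"
  assumes arcs: "arc c" "arc c1" "arc c2"
    and st: "pathstart c = a" "pathstart c1 = a" "pathstart c2 = a"
    and fi: "pathfinish c = b" "pathfinish c1 = b" "pathfinish c2 = b"
    and ab: "a \<noteq> b"
    and i01: "path_image c \<inter> path_image c1 = {a,b}"
    and i02: "path_image c \<inter> path_image c2 = {a,b}"
    and i12: "path_image c1 \<inter> path_image c2 = {a,b}"
    and mid: "path_image c \<inter> inside (path_image c1 \<union> path_image c2) \<noteq> {}"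
  obtains R1 R2 R3 where "open R1" "open R2" "open R3" "connected R1" "connected R2" "connected R3"
    "R1 \<inter> R2 = {}" "R1 \<inter> R3 = {}" "R2 \<inter> R3 = {}"
    "R1 \<union> R2 \<union> R3 = - (path_image c \<union> path_image c1 \<union> path_image c2)"
    "frontier R1 \<inter> frontier R2 \<inter> frontier R3 \<subseteq> {a,b}"
proof -
  let ?T = "path_image c" let ?T1 = "path_image c1" let ?T2 = "path_image c2"
  have J1: "jordan_set (?T1 \<union> ?T)" by (rule jordan_two_arcs[OF arcs(2,1) st(2) fi(2) st(1) fi(1)]) (use i01 in auto)
  have J2: "jordan_set (?T2 \<union> ?T)" by (rule jordan_two_arcs[OF arcs(3,1) st(3) fi(3) st(1) fi(1)]) (use i02 in auto)
  have J12: "jordan_set (?T1 \<union> ?T2)" by (rule jordan_two_arcs[OF arcs(2,3) st(2) fi(2) st(3) fi(3)]) (use i12 in auto)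
  note P1 = jordan_props[OF J1] and P2 = jordan_props[OF J2] and P12 = jordan_props[OF J12]
  obtain S1 S2 where
    s1: "inside (?T1 \<union> ?T) \<inter> inside (?T2 \<union> ?T) = {}"
    and s2: "inside (?T1 \<union> ?T) \<union> inside (?T2 \<union> ?T) \<union> (?T - {a,b}) = inside (?T1 \<union> ?T2)"
    using split_inside_simple_closed_curve[OF arc_imp_simple_path[OF arcs(2)] st(2) fi(2)
        arc_imp_simple_path[OF arcs(3)] st(3) fi(3) arc_imp_simple_path[OF arcs(1)] st(1) fi(1) ab]
      i01 i02 i12 mid by (auto simp: Int_commute)
  show ?thesis
  proof (rule that[of "inside (?T1 \<union> ?T)" "inside (?T2 \<union> ?T)" "outside (?T1 \<union> ?T2)"])
    show "open (inside (?T1 \<union> ?T))" "open (inside (?T2 \<union> ?T))" "open (outside (?T1 \<union> ?T2))"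
      "connected (inside (?T1 \<union> ?T))" "connected (inside (?T2 \<union> ?T))" "connected (outside (?T1 \<union> ?T2))"
      using P1 P2 P12 by auto
    show "inside (?T1 \<union> ?T) \<inter> inside (?T2 \<union> ?T) = {}" by (rule s1)
    show "inside (?T1 \<union> ?T) \<inter> outside (?T1 \<union> ?T2) = {}"
      using s2 P12(8) by blast
    show "inside (?T2 \<union> ?T) \<inter> outside (?T1 \<union> ?T2) = {}"
      using s2 P12(8) by blast
    have n1: "inside (?T1 \<union> ?T) \<inter> ?T = {}" "inside (?T2 \<union> ?T) \<inter> ?T = {}"
      using inside_no_overlap[of "?T1 \<union> ?T"] inside_no_overlap[of "?T2 \<union> ?T"] by blast+
    have ab1: "a \<in> ?T1" "b \<in> ?T1" using st(2) fi(2) pathstart_in_path_image pathfinish_in_path_image by metis+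
    have "inside (?T1 \<union> ?T) \<union> inside (?T2 \<union> ?T) = inside (?T1 \<union> ?T2) - ?T"
      using s2 n1 by blast
    then show "inside (?T1 \<union> ?T) \<union> inside (?T2 \<union> ?T) \<union> outside (?T1 \<union> ?T2) = - (?T \<union> ?T1 \<union> ?T2)"
    proof -
      have "?T \<subseteq> inside (?T1 \<union> ?T2) \<union> ?T1" using s2 ab1 by blast
      then have "outside (?T1 \<union> ?T2) \<inter> ?T = {}" using P12(8) outside_no_overlap[of "?T1 \<union> ?T2"] by blast
      then show ?thesis using \<open>inside (?T1 \<union> ?T) \<union> inside (?T2 \<union> ?T) = inside (?T1 \<union> ?T2) - ?T\<close> P12(9)
        using set_aux[of "inside (?T1 \<union> ?T2)" "outside (?T1 \<union> ?T2)" "?T1 \<union> ?T2" ?T] by (simp add: Un_assoc)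
    qed
    show "frontier (inside (?T1 \<union> ?T)) \<inter> frontier (inside (?T2 \<union> ?T)) \<inter> frontier (outside (?T1 \<union> ?T2)) \<subseteq> {a, b}"
      unfolding P1(10) P2(10) P12(11) using i01 i02 i12 by blast
  qed
qed

lemma theta_regions:
  fixes c0 c1 c2 :: "real \<Rightarrow> complex"
  assumes arcs: "arc c0" "arc c1" "arc c2"
    and st: "pathstart c0 = a" "pathstart c1 = a" "pathstart c2 = a"
    and fi: "pathfinish c0 = b" "pathfinish c1 = b" "pathfinish c2 = b"
    and ab: "a \<noteq> b"
    and i01: "path_image c0 \<inter> path_image c1 = {a,b}"
    and i02: "path_image c0 \<inter> path_image c2 = {a,b}"
    and i12: "path_image c1 \<inter> path_image c2 = {a,b}"
  obtains R1 R2 R3 where "open R1" "open R2" "open R3" "connected R1" "connected R2" "connected R3"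
    "R1 \<inter> R2 = {}" "R1 \<inter> R3 = {}" "R2 \<inter> R3 = {}"
    "R1 \<union> R2 \<union> R3 = - (path_image c0 \<union> path_image c1 \<union> path_image c2)"
    "frontier R1 \<inter> frontier R2 \<inter> frontier R3 \<subseteq> {a,b}"
proof -
  have i10: "path_image c1 \<inter> path_image c0 = {a,b}" using i01 by blast
  have i20: "path_image c2 \<inter> path_image c0 = {a,b}" using i02 by blast
  have i21: "path_image c2 \<inter> path_image c1 = {a,b}" using i12 by blast
  have U1: "path_image c1 \<union> path_image c0 \<union> path_image c2 = path_image c0 \<union> path_image c1 \<union> path_image c2" by blast
  have U2: "path_image c2 \<union> path_image c0 \<union> path_image c1 = path_image c0 \<union> path_image c1 \<union> path_image c2" by blast
  from middle_ex[OF assms] consider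
    (m0) "path_image c0 \<inter> inside (path_image c1 \<union> path_image c2) \<noteq> {}"
    | (m1) "path_image c1 \<inter> inside (path_image c0 \<union> path_image c2) \<noteq> {}"
    | (m2) "path_image c2 \<inter> inside (path_image c0 \<union> path_image c1) \<noteq> {}" by blast
  then show ?thesis
  proof cases
    case m0
    show ?thesis by (rule theta_one[OF arcs st fi ab i01 i02 i12 m0]) (rule that; assumption)
  next
    case m1
    show ?thesis by (rule theta_one[OF arcs(2,1,3) st(2,1,3) fi(2,1,3) ab i10 i12 i02 m1]) (rule that; (assumption | simp only: U1))
  next
    case m2
    show ?thesis by (rule theta_one[OF arcs(3,1,2) st(3,1,2) fi(3,1,2) ab i20 i21 i01 m2]) (rule that; (assumption | simp only: U2))
  qed
qed

lemma comp_keep: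
  assumes "G \<in> components (- D0)" "G \<inter> A = {}"
  shows "G \<in> components (- (D0 \<union> A))"
  unfolding in_components_maximal
proof (intro conjI allI impI)
  show "G \<noteq> {}" "connected G" using assms(1) in_components_nonempty in_components_connected by auto
  show "G \<subseteq> - (D0 \<union> A)" using assms in_components_subset by blast
  fix D assume D: "D \<noteq> {} \<and> G \<subseteq> D \<and> D \<subseteq> - (D0 \<union> A) \<and> connected D"
  have m: "\<forall>D. D \<noteq> {} \<and> G \<subseteq> D \<and> D \<subseteq> - D0 \<and> connected D \<longrightarrow> D = G"
    using assms(1) unfolding in_components_maximal by blast
  have "D \<subseteq> - D0" using D by blast
  then show "D = G" using m D by blast
qed

lemma comp_new:
  assumes "F \<in> components (- D0)" "x \<in> F" "x \<notin> A"
  shows "connected_component_set (- (D0 \<union> A)) x \<in> components (- (D0 \<union> A))"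
    "connected_component_set (- (D0 \<union> A)) x \<subseteq> F"
proof -
  have x: "x \<in> - (D0 \<union> A)" using assms in_components_subset by blast
  then show "connected_component_set (- (D0 \<union> A)) x \<in> components (- (D0 \<union> A))"
    by (simp add: componentsI)
  show "connected_component_set (- (D0 \<union> A)) x \<subseteq> F"
    apply (rule components_maximal[OF assms(1)])
    using x assms connected_component_subset[of "- (D0 \<union> A)" x] by auto
qed

lemma replace_card:
  assumes K: "K \<subseteq> components (- D0)" "finite K" and F: "F \<in> components (- D0)"
    and N: "N \<subseteq> components (- (D0 \<union> A))" "finite N" "\<And>C. C \<in> N \<Longrightarrow> C \<subseteq> F \<and> C \<noteq> {}"
    and GA: "\<And>G. G \<in> K \<Longrightarrow> G \<noteq> F \<Longrightarrow> G \<inter> A = {}"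
  shows "(K - {F}) \<union> N \<subseteq> components (- (D0 \<union> A))" "finite ((K - {F}) \<union> N)"
    "card K + card N \<le> card ((K - {F}) \<union> N) + 1"
proof -
  show "(K - {F}) \<union> N \<subseteq> components (- (D0 \<union> A))"
  proof
    fix G assume "G \<in> (K - {F}) \<union> N"
    then consider "G \<in> K" "G \<noteq> F" | "G \<in> N" by blast
    then show "G \<in> components (- (D0 \<union> A))"
    proof cases
      case 1
      then have "G \<in> components (- D0)" "G \<inter> A = {}" using K(1) GA by auto
      then show ?thesis by (rule comp_keep)
    next
      case 2 then show ?thesis using N(1) by blast
    qed
  qed
  show "finite ((K - {F}) \<union> N)" using K N by auto
  have disj: "(K - {F}) \<inter> N = {}"
  proof (rule ccontr)
    assume "(K - {F}) \<inter> N \<noteq> {}"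
    then obtain G where G: "G \<in> K" "G \<noteq> F" "G \<in> N" by blast
    then have "G \<inter> F = {}" using components_nonoverlap[of G "- D0" F] K F by blast
    moreover have "G \<subseteq> F" "G \<noteq> {}" using N G by auto
    ultimately show False by blast
  qed
  have "card ((K - {F}) \<union> N) = card (K - {F}) + card N"
    using disj K N by (simp add: card_Un_disjoint)
  moreover have "card K \<le> card (K - {F}) + 1"
  proof (cases "F \<in> K")
    case True then show ?thesis using card.remove[OF K(2) True] by simp
  next
    case False then show ?thesis by simp
  qed
  ultimately show "card K + card N \<le> card ((K - {F}) \<union> N) + 1" by linarith
qed

lemma arc_add:
  fixes D0 :: "complex set" and \<gamma> :: "real \<Rightarrow> complex"
  assumes D0: "closed D0" and \<gamma>: "arc \<gamma>" "pathstart \<gamma> \<in> D0" "pathfinish \<gamma> \<in> D0"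
    and disj: "(path_image \<gamma> - {pathstart \<gamma>, pathfinish \<gamma>}) \<inter> D0 = {}"
    and K: "K \<subseteq> components (- D0)" "finite K"
  shows "\<exists>K'. K' \<subseteq> components (- (D0 \<union> path_image \<gamma>)) \<and> finite K' \<and> card K \<le> card K'"
    and "(\<exists>g. arc g \<and> path_image g \<subseteq> D0 \<and> pathstart g = pathfinish \<gamma> \<and> pathfinish g = pathstart \<gamma>) \<Longrightarrow>
         \<exists>K'. K' \<subseteq> components (- (D0 \<union> path_image \<gamma>)) \<and> finite K' \<and> card K + 1 \<le> card K'"
proof -
  let ?A = "path_image \<gamma>"
  let ?Ao = "path_image \<gamma> - {pathstart \<gamma>, pathfinish \<gamma>}"
  have sp: "simple_path \<gamma>" using \<gamma> arc_imp_simple_path by blast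
  have Aoc: "connected ?Ao" using connected_simple_path_endless[OF sp] .
  have Aone: "?Ao \<noteq> {}" using nonempty_simple_path_endless[OF sp] .
  obtain F where F: "F \<in> components (- D0)" "?Ao \<subseteq> F"
    using exists_component_superset[of ?Ao "- D0"] Aoc Aone disj by blast
  have Fopen: "open F" using F(1) D0 open_components by blast
  have GA: "G \<inter> ?A = {}" if "G \<in> K" "G \<noteq> F" for G
  proof -
    have "G \<inter> F = {}" using components_nonoverlap[of G "- D0" F] K F that by blast
    moreover have "G \<subseteq> - D0" using that K in_components_subset by blast
    ultimately show ?thesis using F(2) \<gamma>(2,3) by blast
  qed
  obtain p where p: "p \<in> ?Ao" using Aone by blast
  have FD: "F \<subseteq> - D0" by (rule in_components_subset[OF F(1)])
  {
    have "\<not> F \<subseteq> ?A"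
    proof
      assume "F \<subseteq> ?A"
      then have "F \<subseteq> interior ?A" using Fopen interior_maximal by blast
      then show False using arc_interior_empty[OF \<gamma>(1)] F(2) p by blast
    qed
    then obtain x where x: "x \<in> F" "x \<notin> ?A" by blast
    note C = comp_new[OF F(1) x]
    let ?C = "connected_component_set (- (D0 \<union> ?A)) x"
    have "x \<in> - (D0 \<union> ?A)" using x(1) x(2) FD by (simp add: subset_iff)
    then have "connected_component (- (D0 \<union> ?A)) x x" by (rule connected_component_refl)
    then have Cne: "?C \<noteq> {}" by (metis empty_iff mem_Collect_eq)
    have N1: "{?C} \<subseteq> components (- (D0 \<union> ?A))" using C(1) by blast
    have N3: "\<And>C'. C' \<in> {?C} \<Longrightarrow> C' \<subseteq> F \<and> C' \<noteq> {}" using C(2) Cne by blast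
    note R = replace_card[OF K F(1) N1 _ N3 GA]
    show "\<exists>K'. K' \<subseteq> components (- (D0 \<union> ?A)) \<and> finite K' \<and> card K \<le> card K'"
      apply (rule exI[of _ "(K - {F}) \<union> {?C}"])
      using R by simp
  }
  assume "\<exists>g. arc g \<and> path_image g \<subseteq> D0 \<and> pathstart g = pathfinish \<gamma> \<and> pathfinish g = pathstart \<gamma>"
  then obtain g where g: "arc g" "path_image g \<subseteq> D0" "pathstart g = pathfinish \<gamma>" "pathfinish g = pathstart \<gamma>"
    by blast
  have J: "jordan_set (?A \<union> path_image g)"
    unfolding jordan_set_def
    apply (rule exI[of _ "\<gamma> +++ g"])
    using g \<gamma> disj by (auto simp: simple_path_join_loop_eq path_image_join)
  note PJ = jordan_props[OF J]
  have pD: "p \<notin> D0" using p disj by blast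
  have "open (- D0)" using D0 by auto
  then obtain r where r0: "r > 0" "ball p r \<subseteq> - D0" using pD open_contains_ball by blast
  then have r: "r > 0" "ball p r \<inter> D0 = {}" by auto
  have ballF: "ball p r \<subseteq> F"
    apply (rule components_maximal[OF F(1)])
    using r p F(2) by auto
  have pJ: "p \<in> ?A \<union> path_image g" using p by blast
  obtain x1 where x1: "x1 \<in> ball p r" "x1 \<in> inside (?A \<union> path_image g)"
    using open_closure_meet[of "ball p r" p "inside (?A \<union> path_image g)"] r pJ PJ(13) by auto
  obtain x2 where x2: "x2 \<in> ball p r" "x2 \<in> outside (?A \<union> path_image g)"
    using open_closure_meet[of "ball p r" p "outside (?A \<union> path_image g)"] r pJ PJ(11)
    closure_Un_frontier[of "outside (?A \<union> path_image g)"] by auto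
  have x1A: "x1 \<notin> ?A" using x1 inside_no_overlap[of "?A \<union> path_image g"] by blast
  have x2A: "x2 \<notin> ?A" using x2 outside_no_overlap[of "?A \<union> path_image g"] by blast
  note C1 = comp_new[OF F(1) _ x1A] and C2 = comp_new[OF F(1) _ x2A]
  let ?C1 = "connected_component_set (- (D0 \<union> ?A)) x1"
  let ?C2 = "connected_component_set (- (D0 \<union> ?A)) x2"
  have x1F: "x1 \<in> F" "x2 \<in> F" using x1(1) x2(1) ballF by auto
  have xx: "x1 \<in> - (D0 \<union> ?A)" "x2 \<in> - (D0 \<union> ?A)" using x1F FD x1A x2A by (simp_all add: subset_iff)
  have x1C: "x1 \<in> ?C1" "x2 \<in> ?C2" using xx by (simp_all add: connected_component_refl)
  have ne: "?C1 \<noteq> ?C2"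
  proof
    assume eq: "?C1 = ?C2"
    have x2C: "x2 \<in> ?C1" unfolding eq by (rule x1C(2))
    have "?C1 \<subseteq> - (?A \<union> path_image g)" using connected_component_subset[of "- (D0 \<union> ?A)" x1] g(2) by blast
    then have "?C1 \<inter> frontier (inside (?A \<union> path_image g)) = {}" using PJ(10) by blast
    moreover have "?C1 \<inter> inside (?A \<union> path_image g) \<noteq> {}"
      using x1(2) x1C(1) by blast
    ultimately have "?C1 \<subseteq> inside (?A \<union> path_image g)" using conn_sub connected_connected_component by blast
    then show False using x2C x2 PJ(8) by blast
  qed
  have C1ne: "?C1 \<noteq> {}" "?C2 \<noteq> {}" using x1C by blast+
  have N1: "{?C1, ?C2} \<subseteq> components (- (D0 \<union> ?A))" using C1(1)[OF x1F(1)] C2(1)[OF x1F(2)] by blast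
  have N3: "\<And>C'. C' \<in> {?C1, ?C2} \<Longrightarrow> C' \<subseteq> F \<and> C' \<noteq> {}"
    using C1(2)[OF x1F(1)] C2(2)[OF x1F(2)] C1ne by blast
  have Fin: "finite {?C1, ?C2}" by simp
  note R = replace_card[OF K F(1) N1 Fin N3 GA]
  have c2: "card {?C1, ?C2} = 2" using ne by simp
  show "\<exists>K'. K' \<subseteq> components (- (D0 \<union> ?A)) \<and> finite K' \<and> card K + 1 \<le> card K'"
  proof (intro exI conjI)
    show "(K - {F}) \<union> {?C1, ?C2} \<subseteq> components (- (D0 \<union> ?A))" by (rule R(1))
    show "finite ((K - {F}) \<union> {?C1, ?C2})" by (rule R(2))
    show "card K + 1 \<le> card ((K - {F}) \<union> {?C1, ?C2})" using R(3) c2 by linarith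
  qed
qed

lemma card_image_factor:
  assumes "finite W" "\<And>x y. x \<in> W \<Longrightarrow> y \<in> W \<Longrightarrow> f x = f y \<Longrightarrow> g x = g y"
  shows "card (g ` W) \<le> card (f ` W)"
proof -
  define h where "h z = g (SOME x. x \<in> W \<and> f x = z)" for z
  have "g ` W = h ` (f ` W)"
  proof (rule equalityI; rule subsetI)
    fix w assume "w \<in> g ` W"
    then obtain x where x: "x \<in> W" "w = g x" by blast
    have ex: "\<exists>x'. x' \<in> W \<and> f x' = f x" using x by blast
    have "(SOME x'. x' \<in> W \<and> f x' = f x) \<in> W \<and> f (SOME x'. x' \<in> W \<and> f x' = f x) = f x"
      using someI_ex[OF ex] .
    then have "h (f x) = g x" unfolding h_def using assms(2) x(1) by metis
    then show "w \<in> h ` (f ` W)" using x by force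
  next
    fix w assume "w \<in> h ` (f ` W)"
    then obtain x where x: "x \<in> W" "w = h (f x)" by blast
    have ex: "\<exists>x'. x' \<in> W \<and> f x' = f x" using x by blast
    have "(SOME x'. x' \<in> W \<and> f x' = f x) \<in> W \<and> f (SOME x'. x' \<in> W \<and> f x' = f x) = f x"
      using someI_ex[OF ex] .
    then have "h (f x) = g x" unfolding h_def using assms(2) x(1) by metis
    then show "w \<in> g ` W" using x by force
  qed
  then show ?thesis using card_image_le assms(1) by (metis finite_imageI)
qed

lemma sym_class_eq:
  assumes "sym r" "(a, b) \<in> r\<^sup>*"
  shows "{y \<in> V. (a, y) \<in> r\<^sup>*} = {y \<in> V. (b, y) \<in> r\<^sup>*}"
proof -
  have s: "sym (r\<^sup>*)" using sym_rtrancl[OF assms(1)] .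
  have "(b, a) \<in> r\<^sup>*" using s assms(2) by (meson symD)
  then have "(a, y) \<in> r\<^sup>* \<longleftrightarrow> (b, y) \<in> r\<^sup>*" for y
    using assms(2) rtrancl_trans by metis
  then show ?thesis by simp
qed

definition adj :: "'a set set \<Rightarrow> ('a \<times> 'a) set" where
  "adj S = {(x, y). {x, y} \<in> S}"

lemma sym_adj: "sym (adj S)"
  unfolding adj_def sym_def by (simp add: insert_commute)

definition cls :: "'a set \<Rightarrow> 'a set set \<Rightarrow> 'a set set" where
  "cls V S = (\<lambda>x. {y \<in> V. (x, y) \<in> (adj S)\<^sup>*}) ` V"

lemma cls_empty: "finite (V :: 'a set) \<Longrightarrow> card (cls V {}) = card V"
proof -
  assume "finite V"
  have e: "(adj ({} :: 'a set set))\<^sup>* = Id" by (simp add: adj_def)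
  have "cls V {} = (\<lambda>x. {x}) ` V" unfolding cls_def e by auto
  then show ?thesis by (simp add: card_image)
qed

lemma cls_same:
  assumes "(u, v) \<in> (adj S)\<^sup>*"
  shows "(adj (insert {u, v} S))\<^sup>* = (adj S)\<^sup>*"
proof
  have vu: "(v, u) \<in> (adj S)\<^sup>*" using sym_rtrancl[OF sym_adj] assms by (meson symD)
  have "adj (insert {u, v} S) \<subseteq> (adj S)\<^sup>*"
  proof
    fix p assume "p \<in> adj (insert {u, v} S)"
    then obtain x y where p: "p = (x, y)" "{x, y} = {u, v} \<or> {x, y} \<in> S" unfolding adj_def by blast
    then show "p \<in> (adj S)\<^sup>*"
    proof (cases "{x, y} \<in> S")
      case True then show ?thesis using p unfolding adj_def by blast
    next
      case False
      then have "{x, y} = {u, v}" using p by blast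
      then have "(x = u \<and> y = v) \<or> (x = v \<and> y = u)" by (simp add: doubleton_eq_iff)
      then show ?thesis using p assms vu by blast
    qed
  qed
  then show "(adj (insert {u, v} S))\<^sup>* \<subseteq> (adj S)\<^sup>*" by (rule rtrancl_subset_rtrancl)
  show "(adj S)\<^sup>* \<subseteq> (adj (insert {u, v} S))\<^sup>*"
    by (rule rtrancl_mono) (auto simp: adj_def)
qed

lemma cls_merge:
  assumes fin: "finite V" and uv: "u \<in> V" "v \<in> V" and nc: "(u, v) \<notin> (adj S)\<^sup>*"
  shows "card (cls V (insert {u, v} S)) + 1 \<le> card (cls V S)"
proof -
  let ?R = "(adj S)\<^sup>*" let ?R' = "(adj (insert {u, v} S))\<^sup>*"
  define c where "c x = {y \<in> V. (x, y) \<in> ?R}" for x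
  define c' where "c' x = {y \<in> V. (x, y) \<in> ?R'}" for x
  have RR: "?R \<subseteq> ?R'" by (rule rtrancl_mono) (auto simp: adj_def)
  have uvR: "(u, v) \<in> ?R'" by (auto simp: adj_def)
  have c'eq: "c' a = c' b" if "(a, b) \<in> ?R'" for a b
    unfolding c'_def by (rule sym_class_eq[OF sym_adj that])
  have ceq: "c a = c b" if "(a, b) \<in> ?R" for a b
    unfolding c_def by (rule sym_class_eq[OF sym_adj that])
  let ?W = "V - c v"
  have uW: "u \<in> ?W"
  proof -
    have "(v, u) \<notin> ?R" using nc sym_rtrancl[OF sym_adj] by (meson symD)
    then show ?thesis using uv unfolding c_def by blast
  qed
  have s1: "c' ` V = c' ` ?W"
  proof
    show "c' ` ?W \<subseteq> c' ` V" by blast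
    show "c' ` V \<subseteq> c' ` ?W"
    proof
      fix w assume "w \<in> c' ` V"
      then obtain x where x: "x \<in> V" "w = c' x" by blast
      show "w \<in> c' ` ?W"
      proof (cases "x \<in> c v")
        case False then show ?thesis using x by blast
      next
        case True
        then have "(v, x) \<in> ?R" unfolding c_def by blast
        then have "(v, x) \<in> ?R'" by (rule subsetD[OF RR])
        then have "(u, x) \<in> ?R'" using uvR by (rule rtrancl_trans[rotated])
        then have "c' x = c' u" using c'eq by metis
        then show ?thesis using x uW by blast
      qed
    qed
  qed
  have s2: "card (c' ` ?W) \<le> card (c ` ?W)"
  proof (rule card_image_factor)
    show "finite ?W" using fin by blast
    fix x y assume "x \<in> ?W" "y \<in> ?W" "c x = c y"
    then have "y \<in> c x" unfolding c_def by auto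
    then have "(x, y) \<in> ?R" unfolding c_def by blast
    then have "(x, y) \<in> ?R'" by (rule subsetD[OF RR])
    then show "c' x = c' y" by (rule c'eq)
  qed
  have s3: "c ` ?W \<subseteq> c ` V - {c v}"
  proof
    fix w assume "w \<in> c ` ?W"
    then obtain x where x: "x \<in> ?W" "w = c x" by blast
    have "x \<in> c x" using x unfolding c_def by auto
    then have "c x \<noteq> c v" using x by blast
    then show "w \<in> c ` V - {c v}" using x by blast
  qed
  have cv: "c v \<in> c ` V" using uv(2) by (rule imageI)
  have s4: "card (c ` V - {c v}) + 1 = card (c ` V)"
    using card.remove[OF finite_imageI[OF fin] cv] by simp
  have "card (c ` ?W) \<le> card (c ` V - {c v})" using s3 fin by (simp add: card_mono)
  moreover have "card (c' ` V) = card (c' ` ?W)" using s1 by simp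
  ultimately have "card (c' ` V) + 1 \<le> card (c ` V)" using s2 s4 by linarith
  then show ?thesis unfolding cls_def c_def c'_def .
qed

locale emb =
  fixes V :: "'a set" and E :: "'a set set" and pos :: "'a \<Rightarrow> complex"
    and arc_of :: "'a set \<Rightarrow> real \<Rightarrow> complex"
  assumes finV: "finite V"
    and edges: "\<And>e. e \<in> E \<Longrightarrow> \<exists>u v. u \<in> V \<and> v \<in> V \<and> u \<noteq> v \<and> e = {u, v}"
    and emb: "plane_embedding V E pos arc_of"
begin

abbreviation img where "img e \<equiv> path_image (arc_of e)"

definition DS :: "'a set set \<Rightarrow> complex set" where
  "DS S = pos ` V \<union> (\<Union>e\<in>S. img e)"

lemma injpos: "inj_on pos V"
  using emb unfolding plane_embedding_def by blast

lemma edge_uv: assumes "{u, v} \<in> E" shows "u \<in> V" "v \<in> V" "u \<noteq> v"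
proof -
  obtain x y where xy: "x \<in> V" "y \<in> V" "x \<noteq> y" "{u, v} = {x, y}" using edges[OF assms] by blast
  then show "u \<in> V" "v \<in> V" by (auto simp: doubleton_eq_iff)
  show "u \<noteq> v" using xy by (auto simp: doubleton_eq_iff)
qed

lemma edgeE:
  assumes "e \<in> E"
  obtains u v where "e = {u, v}" "u \<in> V" "v \<in> V" "u \<noteq> v"
  using edges[OF assms] by blast

lemma eprops:
  assumes "{u, v} \<in> E"
  shows "arc (arc_of {u, v})"
    "{pathstart (arc_of {u, v}), pathfinish (arc_of {u, v})} = {pos u, pos v}"
    "img {u, v} \<inter> pos ` V = {pos u, pos v}"
proof -
  have uv: "u \<in> V" "v \<in> V" using edge_uv[OF assms] by auto
  have "\<forall>u\<in>V. \<forall>v\<in>V. {u, v} \<in> E \<longrightarrow> arc (arc_of {u, v}) \<and>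
        {pathstart (arc_of {u, v}), pathfinish (arc_of {u, v})} = {pos u, pos v} \<and>
        path_image (arc_of {u, v}) \<inter> pos ` V = {pos u, pos v}"
    using emb unfolding plane_embedding_def by blast
  then have "arc (arc_of {u, v}) \<and>
        {pathstart (arc_of {u, v}), pathfinish (arc_of {u, v})} = {pos u, pos v} \<and>
        path_image (arc_of {u, v}) \<inter> pos ` V = {pos u, pos v}"
    using uv assms by blast
  then show "arc (arc_of {u, v})"
    "{pathstart (arc_of {u, v}), pathfinish (arc_of {u, v})} = {pos u, pos v}"
    "img {u, v} \<inter> pos ` V = {pos u, pos v}" by auto
qed

lemma earc: "e \<in> E \<Longrightarrow> arc (arc_of e)"
  by (metis edgeE eprops(1))

lemma eends: assumes "e \<in> E" shows "{pathstart (arc_of e), pathfinish (arc_of e)} = pos ` e"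
proof -
  obtain u v where uv: "e = {u, v}" using edgeE[OF assms] by blast
  show ?thesis using eprops(2)[of u v] assms unfolding uv by simp
qed

lemma eV: assumes "e \<in> E" shows "img e \<inter> pos ` V = pos ` e"
proof -
  obtain u v where uv: "e = {u, v}" using edgeE[OF assms] by blast
  show ?thesis using eprops(3)[of u v] assms unfolding uv by simp
qed

lemma eV_sub: assumes "e \<in> E" shows "e \<subseteq> V"
proof -
  obtain u v where uv: "e = {u, v}" "u \<in> V" "v \<in> V" using edgeE[OF assms] by blast
  show ?thesis unfolding uv using uv by simp
qed

lemma edisj: "e \<in> E \<Longrightarrow> e' \<in> E \<Longrightarrow> e \<noteq> e' \<Longrightarrow> img e \<inter> img e' \<subseteq> pos ` (e \<inter> e')"
  using emb unfolding plane_embedding_def by blast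

lemma orient:
  assumes "{u, v} \<in> E"
  obtains g where "arc g" "path_image g = img {u, v}" "pathstart g = pos u" "pathfinish g = pos v"
proof -
  have a: "arc (arc_of {u, v})" and e: "{pathstart (arc_of {u, v}), pathfinish (arc_of {u, v})} = {pos u, pos v}"
    using eprops[OF assms] by auto
  have uv: "pos u \<noteq> pos v" using edge_uv[OF assms] injpos by (meson inj_on_contraD)
  show ?thesis
  proof (cases "pathstart (arc_of {u, v}) = pos u")
    case True
    then have "pathfinish (arc_of {u, v}) = pos v" using e uv by (auto simp: doubleton_eq_iff)
    then show ?thesis using that[OF a] True by blast
  next
    case False
    then have "pathstart (arc_of {u, v}) = pos v" "pathfinish (arc_of {u, v}) = pos u"
      using e uv by (auto simp: doubleton_eq_iff)
    then show ?thesis using that[of "reversepath (arc_of {u, v})"] a by (simp add: arc_reversepath)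
  qed
qed

lemma finE: "finite E"
proof -
  have "E \<subseteq> Pow V" using eV_sub by blast
  then show ?thesis using finV finite_subset by blast
qed

lemma compact_DS: "S \<subseteq> E \<Longrightarrow> compact (DS S)"
proof -
  assume S: "S \<subseteq> E"
  have "finite S" using S finE finite_subset by blast
  moreover have "\<forall>e\<in>S. compact (img e)" using S earc by (meson arc_imp_path compact_path_image subsetD)
  ultimately have "compact (\<Union>e\<in>S. img e)" by (simp add: compact_UN)
  moreover have "compact (pos ` V)" using finV by (simp add: finite_imp_compact)
  ultimately show ?thesis unfolding DS_def by (simp add: compact_Un)
qed

lemma int_disj:
  assumes "e \<in> E" "S \<subseteq> E" "e \<notin> S"
  shows "(img e - pos ` e) \<inter> DS S = {}"
proof -
  have "(img e - pos ` e) \<inter> pos ` V = {}" using eV[OF assms(1)] by blast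
  moreover have "(img e - pos ` e) \<inter> img e' = {}" if "e' \<in> S" for e'
  proof -
    have "e' \<in> E" "e \<noteq> e'" using that assms by auto
    then have "img e \<inter> img e' \<subseteq> pos ` (e \<inter> e')" using edisj assms(1) by blast
    then show ?thesis by blast
  qed
  ultimately show ?thesis unfolding DS_def by blast
qed

lemma path_of_R:
  assumes S: "S \<subseteq> E" and xy: "(x, y) \<in> (adj S)\<^sup>*" and x: "x \<in> V"
  shows "\<exists>g. path g \<and> path_image g \<subseteq> DS S \<and> pathstart g = pos x \<and> pathfinish g = pos y"
  using xy
proof (induct rule: rtrancl_induct)
  case base
  show ?case
    apply (rule exI[of _ "linepath (pos x) (pos x)"])
    using x unfolding DS_def by (simp add: path_def pathstart_def pathfinish_def)
next
  case (step y z)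
  then obtain g where g: "path g" "path_image g \<subseteq> DS S" "pathstart g = pos x" "pathfinish g = pos y" by blast
  have yz: "{y, z} \<in> S" using step(2) unfolding adj_def by blast
  then have yzE: "{y, z} \<in> E" using S by blast
  obtain h where h: "arc h" "path_image h = img {y, z}" "pathstart h = pos y" "pathfinish h = pos z"
    using orient[OF yzE] by blast
  have "path_image h \<subseteq> DS S" using h(2) yz unfolding DS_def by blast
  then show ?case
    apply (intro exI[of _ "g +++ h"])
    using g h by (simp add: arc_imp_path path_image_join)
qed

end

context emb begin

lemma DS_insert: "DS (insert e S) = DS S \<union> img e"
  unfolding DS_def by blast

lemma arc_back:
  assumes S: "S \<subseteq> E" and e: "e \<in> E" "e = {u, v}" and R: "(u, v) \<in> (adj S)\<^sup>*"
  shows "\<exists>q. arc q \<and> path_image q \<subseteq> DS S \<and> pathstart q = pathfinish (arc_of e) \<and> pathfinish q = pathstart (arc_of e)"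
proof -
  have uv: "u \<in> V" "v \<in> V" "u \<noteq> v" using edge_uv e by auto
  have puv: "pos u \<noteq> pos v" using uv injpos by (meson inj_on_contraD)
  obtain g where g: "path g" "path_image g \<subseteq> DS S" "pathstart g = pos u" "pathfinish g = pos v"
    using path_of_R[OF S R uv(1)] by blast
  have ends: "{pathstart (arc_of e), pathfinish (arc_of e)} = {pos u, pos v}" using eends[OF e(1)] e(2) by simp
  show ?thesis
  proof (cases "pathstart (arc_of e) = pos u")
    case True
    then have f: "pathfinish (arc_of e) = pos v" using ends puv by (auto simp: doubleton_eq_iff)
    obtain q where "arc q" "path_image q \<subseteq> path_image (reversepath g)" "pathstart q = pos v" "pathfinish q = pos u"
      using path_contains_arc[of "reversepath g" "pos v" "pos u"] g puv by auto
    then show ?thesis using True f g(2) by (intro exI[of _ q]) auto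
  next
    case False
    then have f: "pathstart (arc_of e) = pos v" "pathfinish (arc_of e) = pos u" using ends puv by (auto simp: doubleton_eq_iff)
    obtain q where "arc q" "path_image q \<subseteq> path_image g" "pathstart q = pos u" "pathfinish q = pos v"
      using path_contains_arc[of g "pos u" "pos v"] g puv by auto
    then show ?thesis using f g(2) by (intro exI[of _ q]) auto
  qed
qed

lemma euler_lb:
  assumes "S \<subseteq> E"
  shows "\<exists>K. K \<subseteq> components (- DS S) \<and> finite K \<and> card S + card (cls V S) + 1 \<le> card K + card V"
proof -
  have "finite S" using assms finE finite_subset by blast
  then show ?thesis using assms
  proof (induct rule: finite_subset_induct')
    case empty
    have "finite (DS {})" unfolding DS_def using finV by simp
    then obtain x where x: "x \<notin> DS {}" using ex_new_if_finite[OF infinite_UNIV_char_0] by blast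
    let ?K = "{connected_component_set (- DS {}) x}"
    have "?K \<subseteq> components (- DS {})" using x by (simp add: componentsI)
    moreover have "card ?K = 1" by simp
    ultimately show ?case using cls_empty[OF finV] by (intro exI[of _ ?K]) auto
  next
    case (insert e S)
    obtain K where K: "K \<subseteq> components (- DS S)" "finite K" "card S + card (cls V S) + 1 \<le> card K + card V"
      using insert(5) by blast
    obtain u v where e: "e = {u, v}" "u \<in> V" "v \<in> V" "u \<noteq> v" using edgeE[OF insert(2)] by blast
    have cS: "card (insert e S) = card S + 1" using insert(1,4) by simp
    have cl: "closed (DS S)" using compact_DS[OF insert(3)] compact_imp_closed by blast
    have a: "arc (arc_of e)" using earc[OF insert(2)] .
    have ends: "{pathstart (arc_of e), pathfinish (arc_of e)} = pos ` e" using eends[OF insert(2)] .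
    have peV: "pos ` e \<subseteq> DS S" using e unfolding DS_def by auto
    have st: "pathstart (arc_of e) \<in> DS S" "pathfinish (arc_of e) \<in> DS S" using ends peV by auto
    have dj: "(img e - {pathstart (arc_of e), pathfinish (arc_of e)}) \<inter> DS S = {}"
      unfolding ends using int_disj[OF insert(2,3,4)] .
    note AA = arc_add[OF cl a st dj K(1,2)]
    show ?case
    proof (cases "(u, v) \<in> (adj S)\<^sup>*")
      case True
      have "cls V (insert e S) = cls V S" unfolding cls_def e cls_same[OF True] ..
      moreover obtain K' where "K' \<subseteq> components (- (DS S \<union> img e))" "finite K'" "card K + 1 \<le> card K'"
        using AA(2) arc_back[OF insert(3,2) e(1) True] by blast
      ultimately show ?thesis using K(3) cS unfolding DS_insert by (intro exI[of _ K']) auto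
    next
      case False
      have "card (cls V (insert e S)) + 1 \<le> card (cls V S)"
        unfolding e by (rule cls_merge[OF finV e(2,3) False])
      moreover obtain K' where "K' \<subseteq> components (- (DS S \<union> img e))" "finite K'" "card K \<le> card K'"
        using AA(1) by blast
      ultimately show ?thesis using K(3) cS unfolding DS_insert by (intro exI[of _ K']) auto
    qed
  qed
qed

end

lemma arc_infinite:
  fixes g :: "real \<Rightarrow> complex"
  assumes "arc g" shows "infinite (path_image g)"
proof
  assume "finite (path_image g)"
  then have "finite (g ` {0..1})" unfolding path_image_def .
  moreover have "inj_on g {0..1}" using assms arc_def by blast
  ultimately have "finite {0..1::real}" using finite_image_iff by blast
  then show False using infinite_Icc[of "0::real" 1] by simp
qed

lemma side_gen:
  assumes "open F" "connected F" "F \<noteq> {}" "frontier F = T" "jordan_set T"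
  shows "F = inside T \<or> F = outside T"
proof -
  note P = jordan_props[OF assms(5)]
  have FT: "F \<inter> T = {}" using assms(1,4) by (simp add: frontier_def interior_open) blast
  show ?thesis
  proof (cases "F \<inter> inside T = {}")
    case False
    have "F \<subseteq> inside T" by (rule conn_sub[OF assms(2)]) (use P(10) FT False in auto)
    moreover have "inside T \<subseteq> F" by (rule conn_sub[OF P(3)]) (use assms(4) FT False inside_no_overlap[of T] in auto)
    ultimately show ?thesis by blast
  next
    case True
    then have Fo: "F \<subseteq> outside T" using FT P(9) by blast
    then have "F \<inter> outside T \<noteq> {}" using assms(3) by blast
    then have "outside T \<subseteq> F" by (intro conn_sub[OF P(6)]) (use assms(4) outside_no_overlap[of T] in auto)
    then show ?thesis using Fo by blast
  qed
qed

lemma three_regions_contra: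
  assumes R: "open R1" "open R2" "open R3" "R1 \<inter> R2 = {}" "R1 \<inter> R3 = {}" "R2 \<inter> R3 = {}"
      "R1 \<union> R2 \<union> R3 = - Th" "connected R1" "connected R2" "connected R3"
      "frontier R1 \<inter> frontier R2 \<inter> frontier R3 \<subseteq> {a, b}"
    and F: "connected F1" "connected F2" "connected F3" "F1 \<noteq> {}" "F2 \<noteq> {}" "F3 \<noteq> {}"
      "F1 \<inter> F2 = {}" "F1 \<inter> F3 = {}" "F2 \<inter> F3 = {}" "F1 \<inter> Th = {}" "F2 \<inter> Th = {}" "F3 \<inter> Th = {}"
      "frontier F1 \<subseteq> Th" "frontier F2 \<subseteq> Th"
    and p: "p \<in> frontier F1" "p \<in> frontier F2" "p \<in> frontier F3" "p \<in> Th" "p \<noteq> a" "p \<noteq> b"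
  shows False
proof -
  have one: "X \<subseteq> R1 \<or> X \<subseteq> R2 \<or> X \<subseteq> R3" if "connected X" "X \<inter> Th = {}" for X
  proof -
    have "X \<subseteq> R1 \<union> R2 \<union> R3" using that R(7) by blast
    have o23: "open (R2 \<union> R3)" using R by blast
    have d: "R1 \<inter> (R2 \<union> R3) \<inter> X = {}" using R by blast
    have "R1 \<inter> X = {} \<or> (R2 \<union> R3) \<inter> X = {}"
      using connectedD[OF that(1) R(1) o23 d] \<open>X \<subseteq> R1 \<union> R2 \<union> R3\<close> by (simp add: Un_assoc)
    then have "X \<subseteq> R1 \<or> X \<subseteq> R2 \<union> R3" using \<open>X \<subseteq> R1 \<union> R2 \<union> R3\<close> by blast
    moreover have "X \<subseteq> R2 \<or> X \<subseteq> R3" if "X \<subseteq> R2 \<union> R3"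
    proof -
      have "R2 \<inter> R3 \<inter> X = {}" using R by blast
      then have "R2 \<inter> X = {} \<or> R3 \<inter> X = {}" using connectedD[OF \<open>connected X\<close> R(2) R(3)] that by blast
      then show ?thesis using that by blast
    qed
    ultimately show ?thesis by blast
  qed
  have fill: "R \<subseteq> X" if "X \<subseteq> R" "connected R" "R \<inter> Th = {}" "frontier X \<subseteq> Th" "X \<noteq> {}" for X R
    apply (rule conn_sub[OF that(2)]) using that by auto
  have fr: "p \<in> frontier R" if "X \<subseteq> R" "p \<in> frontier X" "R \<inter> Th = {}" for X R
  proof -
    have "p \<in> closure X" using that(2) frontier_def by (metis DiffD1)
    then have "p \<in> closure R" using closure_mono[OF that(1)] by blast
    moreover have "p \<notin> R" using that(3) p(4) by blast
    moreover have "interior R \<subseteq> R" by (rule interior_subset)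
    ultimately show ?thesis by (auto simp: frontier_def)
  qed
  have RT: "R1 \<inter> Th = {}" "R2 \<inter> Th = {}" "R3 \<inter> Th = {}" using R(7) by blast+
  have pair12: "\<not> (F1 \<subseteq> R \<and> F2 \<subseteq> R)" if "connected R" "R \<inter> Th = {}" for R
  proof
    assume a: "F1 \<subseteq> R \<and> F2 \<subseteq> R"
    then have "R \<subseteq> F1" "R \<subseteq> F2" using fill[of F1 R] fill[of F2 R] that F by auto
    then show False using a F by blast
  qed
  have pair13: "\<not> (F1 \<subseteq> R \<and> F3 \<subseteq> R)" if "connected R" "R \<inter> Th = {}" for R
  proof
    assume a: "F1 \<subseteq> R \<and> F3 \<subseteq> R"
    then have "R \<subseteq> F1" using fill[of F1 R] that F by auto
    then show False using a F by blast
  qed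
  have pair23: "\<not> (F2 \<subseteq> R \<and> F3 \<subseteq> R)" if "connected R" "R \<inter> Th = {}" for R
  proof
    assume a: "F2 \<subseteq> R \<and> F3 \<subseteq> R"
    then have "R \<subseteq> F2" using fill[of F2 R] that F by auto
    then show False using a F by blast
  qed
  have c1: "F1 \<subseteq> R1 \<or> F1 \<subseteq> R2 \<or> F1 \<subseteq> R3" using one F by blast
  have c2: "F2 \<subseteq> R1 \<or> F2 \<subseteq> R2 \<or> F2 \<subseteq> R3" using one F by blast
  have c3: "F3 \<subseteq> R1 \<or> F3 \<subseteq> R2 \<or> F3 \<subseteq> R3" using one F by blast
  note q12 = pair12[OF R(8) RT(1)] pair12[OF R(9) RT(2)] pair12[OF R(10) RT(3)]
  note q13 = pair13[OF R(8) RT(1)] pair13[OF R(9) RT(2)] pair13[OF R(10) RT(3)]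
  note q23 = pair23[OF R(8) RT(1)] pair23[OF R(9) RT(2)] pair23[OF R(10) RT(3)]
  have "p \<in> frontier R1"
    using c1 c2 c3 q12 q13 q23 fr[OF _ p(1) RT(1)] fr[OF _ p(2) RT(1)] fr[OF _ p(3) RT(1)] by blast
  moreover have "p \<in> frontier R2"
    using c1 c2 c3 q12 q13 q23 fr[OF _ p(1) RT(2)] fr[OF _ p(2) RT(2)] fr[OF _ p(3) RT(2)] by blast
  moreover have "p \<in> frontier R3"
    using c1 c2 c3 q12 q13 q23 fr[OF _ p(1) RT(3)] fr[OF _ p(2) RT(3)] fr[OF _ p(3) RT(3)] by blast
  ultimately show False using R(11) p(5,6) by blast
qed

context emb begin

definition triF where
  "triF F a b c \<longleftrightarrow> a \<noteq> b \<and> b \<noteq> c \<and> a \<noteq> c \<and> {a, b} \<in> E \<and> {b, c} \<in> E \<and> {a, c} \<in> E \<and>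
     frontier F = img {a, b} \<union> img {b, c} \<union> img {a, c}"

lemma triF_swap12: "triF F a b c \<Longrightarrow> triF F b a c"
  unfolding triF_def by (auto simp: insert_commute Un_ac)

lemma triF_swap23: "triF F a b c \<Longrightarrow> triF F a c b"
  unfolding triF_def by (auto simp: insert_commute Un_ac)

lemma drawing_DS: "drawing V E pos arc_of = DS E"
  unfolding drawing_def DS_def ..

lemma faces_DS: "faces V E pos arc_of = components (- DS E)"
  unfolding faces_def drawing_DS ..

lemma face_props:
  assumes "F \<in> faces V E pos arc_of"
  shows "open F" "connected F" "F \<noteq> {}" "F \<inter> DS E = {}"
proof -
  have F: "F \<in> components (- DS E)" using assms faces_DS by simp
  have "open (- DS E)" using compact_DS[of E] compact_imp_closed by blast
  then show "open F" using F open_components by blast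
  show "connected F" using F in_components_connected by blast
  show "F \<noteq> {}" using F in_components_nonempty by blast
  show "F \<inter> DS E = {}" using F in_components_subset by blast
qed

lemma img_DS: "e \<in> E \<Longrightarrow> img e \<subseteq> DS E"
  unfolding DS_def by blast

lemma img_meet:
  assumes "e1 \<in> E" "e2 \<in> E" "e1 \<noteq> e2" "x \<in> img e1" "x \<in> img e2"
  shows "x \<in> pos ` (e1 \<inter> e2)"
  using edisj[OF assms(1-3)] assms(4,5) by blast

lemma tri_jordan:
  assumes "triF F a b c"
  shows "jordan_set (frontier F)"
proof -
  have d: "a \<noteq> b" "b \<noteq> c" "a \<noteq> c" and E3: "{a, b} \<in> E" "{b, c} \<in> E" "{a, c} \<in> E"
    and fr: "frontier F = img {a, b} \<union> img {b, c} \<union> img {a, c}"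
    using assms unfolding triF_def by auto
  have Eca: "{c, a} \<in> E" using E3(3) by (simp add: insert_commute)
  obtain g1 where g1: "arc g1" "path_image g1 = img {a, b}" "pathstart g1 = pos a" "pathfinish g1 = pos b"
    using orient[OF E3(1)] by blast
  obtain g2 where g2: "arc g2" "path_image g2 = img {b, c}" "pathstart g2 = pos b" "pathfinish g2 = pos c"
    using orient[OF E3(2)] by blast
  obtain g3 where g3: "arc g3" "path_image g3 = img {c, a}" "pathstart g3 = pos c" "pathfinish g3 = pos a"
    using orient[OF Eca] by blast
  have ca: "{c, a} = {a, c}" by (simp add: insert_commute)
  have ne1: "{b, c} \<noteq> {a, c}" "{a, b} \<noteq> {b, c}" "{a, b} \<noteq> {a, c}" using d by (auto simp: doubleton_eq_iff)
  have i23: "path_image g2 \<inter> path_image g3 \<subseteq> {pathstart g3}"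
  proof
    fix x assume "x \<in> path_image g2 \<inter> path_image g3"
    then have "x \<in> pos ` ({b, c} \<inter> {a, c})" using img_meet[OF E3(2) E3(3) ne1(1)] g2 g3 ca by auto
    moreover have "{b, c} \<inter> {a, c} = {c}" using d by auto
    ultimately show "x \<in> {pathstart g3}" using g3 by auto
  qed
  have a23: "arc (g2 +++ g3)" using arc_join[OF g2(1) g3(1)] g2 g3 i23 by simp
  have i1: "path_image g1 \<inter> path_image (g2 +++ g3) \<subseteq> {pathstart g1, pathstart (g2 +++ g3)}"
  proof
    fix x assume x: "x \<in> path_image g1 \<inter> path_image (g2 +++ g3)"
    then have "x \<in> img {a, b}" "x \<in> img {b, c} \<or> x \<in> img {a, c}"
      using g1 g2 g3 ca by (auto simp: path_image_join)
    then have "x \<in> pos ` ({a, b} \<inter> {b, c}) \<or> x \<in> pos ` ({a, b} \<inter> {a, c})"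
      using img_meet[OF E3(1) E3(2) ne1(2)] img_meet[OF E3(1) E3(3) ne1(3)] by blast
    moreover have "{a, b} \<inter> {b, c} = {b}" "{a, b} \<inter> {a, c} = {a}" using d by auto
    ultimately show "x \<in> {pathstart g1, pathstart (g2 +++ g3)}" using g1 g2 by auto
  qed
  have "simple_path (g1 +++ (g2 +++ g3))"
    by (rule simple_path_join_loop[OF g1(1) a23]) (use g1 g2 g3 i1 in auto)
  moreover have "path_image (g1 +++ (g2 +++ g3)) = frontier F"
    using g1 g2 g3 fr ca by (simp add: path_image_join Un_assoc)
  moreover have "pathfinish (g1 +++ (g2 +++ g3)) = pathstart (g1 +++ (g2 +++ g3))" using g1 g3 by simp
  ultimately show ?thesis unfolding jordan_set_def by blast
qed

lemma face_side:
  assumes "F \<in> faces V E pos arc_of" "triF F a b c"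
  shows "F = inside (frontier F) \<or> F = outside (frontier F)"
  using side_gen[OF face_props(1-3)[OF assms(1)] refl tri_jordan[OF assms(2)]] .

lemma triF_DS: "triF F a b c \<Longrightarrow> frontier F \<subseteq> DS E"
  unfolding triF_def using img_DS by blast

definition edgesF where "edgesF F = {e \<in> E. img e \<subseteq> frontier F}"

lemma edgesF_eq:
  assumes "triF F a b c"
  shows "edgesF F = {{a, b}, {b, c}, {a, c}}"
proof -
  have d: "a \<noteq> b" "b \<noteq> c" "a \<noteq> c" and E3: "{a, b} \<in> E" "{b, c} \<in> E" "{a, c} \<in> E"
    and fr: "frontier F = img {a, b} \<union> img {b, c} \<union> img {a, c}"
    using assms unfolding triF_def by auto
  have key: "e \<in> {{a, b}, {b, c}, {a, c}}" if e: "e \<in> E" "img e \<subseteq> frontier F" for e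
  proof (rule ccontr)
    assume ne: "e \<notin> {{a, b}, {b, c}, {a, c}}"
    have n1: "e \<noteq> {a, b}" "e \<noteq> {b, c}" "e \<noteq> {a, c}" using ne by auto
    have eVs: "pos ` e \<subseteq> pos ` V" using eV_sub[OF e(1)] by (rule image_mono)
    have "img e \<subseteq> pos ` V"
    proof
      fix x assume x: "x \<in> img e"
      then have "x \<in> frontier F" using e(2) by (rule subsetD[rotated])
      then consider "x \<in> img {a, b}" | "x \<in> img {b, c}" | "x \<in> img {a, c}" unfolding fr by blast
      then have "x \<in> pos ` e"
      proof cases
        case 1 then show ?thesis using img_meet[OF e(1) E3(1) n1(1) x] by blast
      next
        case 2 then show ?thesis using img_meet[OF e(1) E3(2) n1(2) x] by blast
      next
        case 3 then show ?thesis using img_meet[OF e(1) E3(3) n1(3) x] by blast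
      qed
      then show "x \<in> pos ` V" using eVs by (rule subsetD[rotated])
    qed
    then have "finite (img e)" using finV finite_subset by blast
    then show False using arc_infinite[OF earc[OF e(1)]] by blast
  qed
  show ?thesis
  proof (rule equalityI)
    show "edgesF F \<subseteq> {{a, b}, {b, c}, {a, c}}"
    proof
      fix e assume "e \<in> edgesF F"
      then have "e \<in> E" "img e \<subseteq> frontier F" unfolding edgesF_def by auto
      then show "e \<in> {{a, b}, {b, c}, {a, c}}" by (rule key)
    qed
    show "{{a, b}, {b, c}, {a, c}} \<subseteq> edgesF F"
      unfolding edgesF_def using E3 fr by auto
  qed
qed

lemma card_edgesF:
  assumes "triF F a b c" shows "card (edgesF F) = 3"
proof -
  have d: "a \<noteq> b" "b \<noteq> c" "a \<noteq> c" using assms unfolding triF_def by auto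
  have "{a, b} \<noteq> {b, c}" "{a, b} \<noteq> {a, c}" "{b, c} \<noteq> {a, c}" using d by (auto simp: doubleton_eq_iff)
  then show ?thesis unfolding edgesF_eq[OF assms] by simp
qed

lemma tri_at_edge:
  assumes "triF F a b c" "{u, v} \<in> edgesF F"
  shows "\<exists>w. triF F u v w"
proof -
  have d: "a \<noteq> b" "b \<noteq> c" "a \<noteq> c" using assms unfolding triF_def by auto
  have "{u, v} \<in> {{a, b}, {b, c}, {a, c}}" using assms(2) unfolding edgesF_eq[OF assms(1)] .
  then have "{u, v} = {a, b} \<or> {u, v} = {b, c} \<or> {u, v} = {a, c}" by simp
  then consider "u = a" "v = b" | "u = b" "v = a" | "u = b" "v = c" | "u = c" "v = b"
    | "u = a" "v = c" | "u = c" "v = a"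
    unfolding doubleton_eq_iff by blast
  then show ?thesis
  proof cases
    case 1 then show ?thesis using assms(1) by blast
  next
    case 2 then show ?thesis using triF_swap12[OF assms(1)] by blast
  next
    case 3 then show ?thesis using triF_swap23[OF triF_swap12[OF assms(1)]] by blast
  next
    case 4 then show ?thesis using triF_swap23[OF triF_swap12[OF triF_swap23[OF assms(1)]]] by blast
  next
    case 5 then show ?thesis using triF_swap23[OF assms(1)] by blast
  next
    case 6 then show ?thesis using triF_swap12[OF triF_swap23[OF assms(1)]] by blast
  qed
qed

end

context emb begin

lemma faces_disj:
  assumes "F1 \<in> faces V E pos arc_of" "F2 \<in> faces V E pos arc_of" "F1 \<noteq> F2"
  shows "F1 \<inter> F2 = {}"
  using components_nonoverlap[of F1 "- DS E" F2] assms unfolding faces_DS by blast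

lemma triF_parts:
  assumes "triF F a b c"
  shows "a \<noteq> b" "b \<noteq> c" "a \<noteq> c" "{a, b} \<in> E" "{b, c} \<in> E" "{a, c} \<in> E"
    "frontier F = img {a, b} \<union> img {b, c} \<union> img {a, c}"
  using assms unfolding triF_def by auto

lemma side_faces:
  assumes F: "F1 \<in> faces V E pos arc_of" "F2 \<in> faces V E pos arc_of" "F3 \<in> faces V E pos arc_of"
    and d: "F1 \<noteq> F2" "F1 \<noteq> F3" "F2 \<noteq> F3"
    and t: "triF F1 u v w" "triF F2 u v w"
  shows False
proof -
  have fr: "frontier F2 = frontier F1" using triF_parts(7)[OF t(1)] triF_parts(7)[OF t(2)] by simp
  define T where "T = frontier F1"
  have J: "jordan_set T" unfolding T_def by (rule tri_jordan[OF t(1)])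
  note P = jordan_props[OF J]
  have s1: "F1 = inside T \<or> F1 = outside T" unfolding T_def by (rule face_side[OF F(1) t(1)])
  have s2: "F2 = inside T \<or> F2 = outside T" unfolding T_def fr[symmetric] by (rule face_side[OF F(2) t(2)])
  have TD: "T \<subseteq> DS E" unfolding T_def by (rule triF_DS[OF t(1)])
  have "F3 \<inter> DS E = {}" using face_props(4)[OF F(3)] .
  then have "F3 \<subseteq> inside T \<union> outside T" using TD P(9) by blast
  moreover have "F3 \<noteq> {}" using face_props(3)[OF F(3)] .
  ultimately have "F3 \<inter> inside T \<noteq> {} \<or> F3 \<inter> outside T \<noteq> {}" by blast
  moreover have "inside T \<in> {F1, F2}" "outside T \<in> {F1, F2}" using s1 s2 d(1) by auto
  ultimately have "F3 \<inter> F1 \<noteq> {} \<or> F3 \<inter> F2 \<noteq> {}" by blast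
  then show False using faces_disj[OF F(1) F(3) d(2)] faces_disj[OF F(2) F(3) d(3)] by blast
qed

lemma two_edge_arc:
  assumes "{u, w} \<in> E" "{w, v} \<in> E" "u \<noteq> v"
  obtains g where "arc g" "path_image g = img {u, w} \<union> img {w, v}" "pathstart g = pos u" "pathfinish g = pos v"
proof -
  have d: "u \<noteq> w" "w \<noteq> v" using edge_uv assms by auto
  obtain a where a: "arc a" "path_image a = img {u, w}" "pathstart a = pos u" "pathfinish a = pos w"
    using orient[OF assms(1)] by blast
  obtain b where b: "arc b" "path_image b = img {w, v}" "pathstart b = pos w" "pathfinish b = pos v"
    using orient[OF assms(2)] by blast
  have ne: "{u, w} \<noteq> {w, v}" using d assms(3) by (auto simp: doubleton_eq_iff)
  have int: "{u, w} \<inter> {w, v} = {w}" using d assms(3) by auto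
  have "path_image a \<inter> path_image b \<subseteq> {pathstart b}"
    using edisj[OF assms(1,2) ne] a b int by simp
  then have "arc (a +++ b)" using arc_join[OF a(1) b(1)] a b by simp
  then show ?thesis using that[of "a +++ b"] a b by (simp add: path_image_join)
qed

lemma theta_faces:
  assumes F: "F1 \<in> faces V E pos arc_of" "F2 \<in> faces V E pos arc_of" "F3 \<in> faces V E pos arc_of"
    and d: "F1 \<noteq> F2" "F1 \<noteq> F3" "F2 \<noteq> F3"
    and t: "triF F1 u v w1" "triF F2 u v w2" and w: "w1 \<noteq> w2"
    and e3: "{u, v} \<in> edgesF F3"
  shows False
proof -
  note t1 = triF_parts[OF t(1)] and t2 = triF_parts[OF t(2)]
  have E1: "{w1, v} \<in> E" using t1(5) by (simp add: insert_commute)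
  have E2: "{w2, v} \<in> E" using t2(5) by (simp add: insert_commute)
  obtain g0 where g0: "arc g0" "path_image g0 = img {u, v}" "pathstart g0 = pos u" "pathfinish g0 = pos v"
    using orient[OF t1(4)] by blast
  obtain g1 where g1: "arc g1" "path_image g1 = img {u, w1} \<union> img {w1, v}" "pathstart g1 = pos u" "pathfinish g1 = pos v"
    using two_edge_arc[OF t1(6) E1 t1(1)] by blast
  obtain g2 where g2: "arc g2" "path_image g2 = img {u, w2} \<union> img {w2, v}" "pathstart g2 = pos u" "pathfinish g2 = pos v"
    using two_edge_arc[OF t2(6) E2 t2(1)] by blast
  have puv: "pos u \<noteq> pos v" using t1(1) t1(4) edge_uv injpos by (meson inj_on_contraD)
  have uv_in: "pos u \<in> path_image g0" "pos v \<in> path_image g0" "pos u \<in> path_image g1" "pos v \<in> path_image g1"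
    "pos u \<in> path_image g2" "pos v \<in> path_image g2"
    using g0 g1 g2 pathstart_in_path_image pathfinish_in_path_image by metis+
  have m: "x \<in> pos ` (e1 \<inter> e2)" if "e1 \<in> E" "e2 \<in> E" "e1 \<noteq> e2" "x \<in> img e1" "x \<in> img e2" for x e1 e2
    using img_meet that by blast
  have n01: "{u, v} \<noteq> {u, w1}" "{u, v} \<noteq> {w1, v}" using t1 by (auto simp: doubleton_eq_iff)
  have n02: "{u, v} \<noteq> {u, w2}" "{u, v} \<noteq> {w2, v}" using t2 by (auto simp: doubleton_eq_iff)
  have n12: "{u, w1} \<noteq> {u, w2}" "{u, w1} \<noteq> {w2, v}" "{w1, v} \<noteq> {u, w2}" "{w1, v} \<noteq> {w2, v}"
    using t1 t2 w by (auto simp: doubleton_eq_iff)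
  have s01: "{u, v} \<inter> {u, w1} = {u}" "{u, v} \<inter> {w1, v} = {v}" using t1 by auto
  have s02: "{u, v} \<inter> {u, w2} = {u}" "{u, v} \<inter> {w2, v} = {v}" using t2 by auto
  have s12: "{u, w1} \<inter> {u, w2} = {u}" "{u, w1} \<inter> {w2, v} = {}" "{w1, v} \<inter> {u, w2} = {}" "{w1, v} \<inter> {w2, v} = {v}"
    using t1 t2 w by auto
  have i01: "path_image g0 \<inter> path_image g1 = {pos u, pos v}"
  proof
    show "path_image g0 \<inter> path_image g1 \<subseteq> {pos u, pos v}"
    proof
      fix x assume x: "x \<in> path_image g0 \<inter> path_image g1"
      then have x0: "x \<in> img {u, v}" and "x \<in> img {u, w1} \<or> x \<in> img {w1, v}" using g0 g1 by auto
      then show "x \<in> {pos u, pos v}"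
        using m[OF t1(4) t1(6) n01(1) x0] m[OF t1(4) E1 n01(2) x0] s01 by auto
    qed
    show "{pos u, pos v} \<subseteq> path_image g0 \<inter> path_image g1" using uv_in by auto
  qed
  have i02: "path_image g0 \<inter> path_image g2 = {pos u, pos v}"
  proof
    show "path_image g0 \<inter> path_image g2 \<subseteq> {pos u, pos v}"
    proof
      fix x assume x: "x \<in> path_image g0 \<inter> path_image g2"
      then have x0: "x \<in> img {u, v}" and "x \<in> img {u, w2} \<or> x \<in> img {w2, v}" using g0 g2 by auto
      then show "x \<in> {pos u, pos v}"
        using m[OF t2(4) t2(6) n02(1) x0] m[OF t2(4) E2 n02(2) x0] s02 by auto
    qed
    show "{pos u, pos v} \<subseteq> path_image g0 \<inter> path_image g2" using uv_in by auto
  qed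
  have i12: "path_image g1 \<inter> path_image g2 = {pos u, pos v}"
  proof
    show "path_image g1 \<inter> path_image g2 \<subseteq> {pos u, pos v}"
    proof
      fix x assume x: "x \<in> path_image g1 \<inter> path_image g2"
      then have "x \<in> img {u, w1} \<or> x \<in> img {w1, v}" "x \<in> img {u, w2} \<or> x \<in> img {w2, v}" using g1 g2 by auto
      then consider "x \<in> img {u, w1}" "x \<in> img {u, w2}" | "x \<in> img {u, w1}" "x \<in> img {w2, v}"
        | "x \<in> img {w1, v}" "x \<in> img {u, w2}" | "x \<in> img {w1, v}" "x \<in> img {w2, v}" by blast
      then show "x \<in> {pos u, pos v}"
      proof cases
        case 1 then show ?thesis using m[OF t1(6) t2(6) n12(1)] s12(1) by auto
      next
        case 2 then show ?thesis using m[OF t1(6) E2 n12(2)] s12(2) by auto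
      next
        case 3 then show ?thesis using m[OF E1 t2(6) n12(3)] s12(3) by auto
      next
        case 4 then show ?thesis using m[OF E1 E2 n12(4)] s12(4) by auto
      qed
    qed
    show "{pos u, pos v} \<subseteq> path_image g1 \<inter> path_image g2" using uv_in by auto
  qed
  obtain R1 R2 R3 where R: "open R1" "open R2" "open R3" "connected R1" "connected R2" "connected R3"
    "R1 \<inter> R2 = {}" "R1 \<inter> R3 = {}" "R2 \<inter> R3 = {}"
    "R1 \<union> R2 \<union> R3 = - (path_image g0 \<union> path_image g1 \<union> path_image g2)"
    "frontier R1 \<inter> frontier R2 \<inter> frontier R3 \<subseteq> {pos u, pos v}"
    by (rule theta_regions[OF g0(1) g1(1) g2(1) g0(3) g1(3) g2(3) g0(4) g1(4) g2(4) puv i01 i02 i12])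
  let ?Th = "path_image g0 \<union> path_image g1 \<union> path_image g2"
  have ThD: "?Th \<subseteq> DS E" unfolding g0(2) g1(2) g2(2)
    using img_DS[OF t1(4)] img_DS[OF t1(6)] img_DS[OF E1] img_DS[OF t2(6)] img_DS[OF E2] by (simp only: Un_subset_iff)
  have "path_image g0 - {pathstart g0, pathfinish g0} \<noteq> {}"
    by (rule nonempty_simple_path_endless[OF arc_imp_simple_path[OF g0(1)]])
  then obtain p where p0: "p \<in> path_image g0 - {pathstart g0, pathfinish g0}" by blast
  then have p: "p \<in> path_image g0" "p \<noteq> pos u" "p \<noteq> pos v" using g0(3,4) by auto
  have "img {u, v} \<subseteq> frontier F3" using e3 unfolding edgesF_def by blast
  then have pF3: "p \<in> frontier F3" using p(1) g0(2) by blast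
  have c1: "{v, w1} = {w1, v}" "{v, w2} = {w2, v}" by (rule insert_commute)+
  have fr1: "frontier F1 = img {u, v} \<union> img {w1, v} \<union> img {u, w1}" using t1(7) unfolding c1 by blast
  have fr2: "frontier F2 = img {u, v} \<union> img {w2, v} \<union> img {u, w2}" using t2(7) unfolding c1 by blast
  show False
  proof (rule three_regions_contra[OF R(1,2,3,7,8,9,10,4,5,6,11)])
    show "connected F1" "connected F2" "connected F3" "F1 \<noteq> {}" "F2 \<noteq> {}" "F3 \<noteq> {}"
      using face_props F by auto
    show "F1 \<inter> F2 = {}" "F1 \<inter> F3 = {}" "F2 \<inter> F3 = {}" using faces_disj F d by auto
    show "F1 \<inter> ?Th = {}" "F2 \<inter> ?Th = {}" "F3 \<inter> ?Th = {}" using face_props(4) F ThD by blast+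
    show "frontier F1 \<subseteq> ?Th" "frontier F2 \<subseteq> ?Th" unfolding fr1 fr2 using g0 g1 g2 by auto
    show "p \<in> frontier F1" "p \<in> frontier F2" unfolding fr1 fr2 using p g0 by auto
    show "p \<in> frontier F3" by (rule pF3)
    show "p \<in> ?Th" "p \<noteq> pos u" "p \<noteq> pos v" using p by auto
  qed
qed

end

lemma three_elems:
  assumes "finite A" "\<not> card A \<le> 2"
  obtains x y z where "x \<in> A" "y \<in> A" "z \<in> A" "x \<noteq> y" "x \<noteq> z" "y \<noteq> z"
proof -
  have "A \<noteq> {}" using assms by auto
  then obtain x where x: "x \<in> A" by blast
  have "A - {x} \<noteq> {}"
  proof
    assume "A - {x} = {}"
    then have "A \<subseteq> {x}" by blast
    then have "card A \<le> card {x}" by (intro card_mono) auto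
    then show False using assms by simp
  qed
  then obtain y where y: "y \<in> A" "y \<noteq> x" by blast
  have "A - {x, y} \<noteq> {}"
  proof
    assume "A - {x, y} = {}"
    then have "A \<subseteq> {x, y}" by blast
    then have "card A \<le> card {x, y}" by (intro card_mono) auto
    moreover have "card {x, y} \<le> 2" by (simp add: card_insert_le_m1)
    ultimately show False using assms by simp
  qed
  then obtain z where z: "z \<in> A" "z \<noteq> x" "z \<noteq> y" by blast
  show ?thesis using that[OF x y(1) z(1)] y z by blast
qed

lemma double_count:
  assumes "finite A" "finite B"
  shows "(\<Sum>a\<in>A. card {b \<in> B. r a b}) = (\<Sum>b\<in>B. card {a \<in> A. r a b})"
proof -
  have c: "card {x \<in> X. P x} = (\<Sum>x\<in>X. if P x then 1 else 0)" if "finite X" for X :: "'c set" and P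
    using sum.inter_filter[OF that, of "\<lambda>_. 1::nat" P] by simp
  have "(\<Sum>a\<in>A. card {b \<in> B. r a b}) = (\<Sum>a\<in>A. \<Sum>b\<in>B. if r a b then 1 else 0)"
    using c[OF assms(2)] by simp
  also have "\<dots> = (\<Sum>b\<in>B. \<Sum>a\<in>A. if r a b then 1 else 0)" by (rule sum.swap)
  also have "\<dots> = (\<Sum>b\<in>B. card {a \<in> A. r a b})" using c[OF assms(1)] by simp
  finally show ?thesis .
qed

locale tri = emb +
  assumes tri: "\<And>F. F \<in> faces V E pos arc_of \<Longrightarrow> \<exists>a b c. a \<noteq> b \<and> b \<noteq> c \<and> a \<noteq> c \<and>
     {a, b} \<in> E \<and> {b, c} \<in> E \<and> {a, c} \<in> E \<and>
     frontier F = path_image (arc_of {a, b}) \<union> path_image (arc_of {b, c}) \<union> path_image (arc_of {a, c})"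
begin

lemma triE: assumes "F \<in> faces V E pos arc_of" obtains a b c where "triF F a b c"
  using tri[OF assms] unfolding triF_def by blast

lemma faces_finite: "finite (faces V E pos arc_of)"
proof -
  define f1 where "f1 = (\<lambda>(a, b, c). inside (img {a, b} \<union> img {b, c} \<union> img {a, c}))"
  define f2 where "f2 = (\<lambda>(a, b, c). outside (img {a, b} \<union> img {b, c} \<union> img {a, c}))"
  have "faces V E pos arc_of \<subseteq> f1 ` (V \<times> V \<times> V) \<union> f2 ` (V \<times> V \<times> V)"
  proof
    fix F assume F: "F \<in> faces V E pos arc_of"
    then obtain a b c where t: "triF F a b c" by (rule triE)
    note tp = triF_parts[OF t]
    have abc: "(a, b, c) \<in> V \<times> V \<times> V" using edge_uv tp(4,5) by auto
    have fr: "frontier F = img {a, b} \<union> img {b, c} \<union> img {a, c}" by (rule tp(7))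
    have "F = inside (frontier F) \<or> F = outside (frontier F)" by (rule face_side[OF F t])
    then have "F = f1 (a, b, c) \<or> F = f2 (a, b, c)" unfolding f1_def f2_def fr by simp
    then show "F \<in> f1 ` (V \<times> V \<times> V) \<union> f2 ` (V \<times> V \<times> V)" using abc by blast
  qed
  moreover have "finite (f1 ` (V \<times> V \<times> V) \<union> f2 ` (V \<times> V \<times> V))" using finV by simp
  ultimately show ?thesis using finite_subset by blast
qed

lemma le2:
  assumes e: "e \<in> E"
  shows "card {F \<in> faces V E pos arc_of. e \<in> edgesF F} \<le> 2"
proof (rule ccontr)
  let ?A = "{F \<in> faces V E pos arc_of. e \<in> edgesF F}"
  assume "\<not> card ?A \<le> 2"
  moreover have "finite ?A" using faces_finite by simp
  ultimately obtain F1 F2 F3 where F: "F1 \<in> ?A" "F2 \<in> ?A" "F3 \<in> ?A" "F1 \<noteq> F2" "F1 \<noteq> F3" "F2 \<noteq> F3"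
    using three_elems by blast
  obtain u v where uv: "e = {u, v}" using edgeE[OF e] by blast
  have Ff: "F1 \<in> faces V E pos arc_of" "F2 \<in> faces V E pos arc_of" "F3 \<in> faces V E pos arc_of" using F by auto
  have Fe: "{u, v} \<in> edgesF F1" "{u, v} \<in> edgesF F2" "{u, v} \<in> edgesF F3" using F uv by auto
  obtain a1 b1 c1 where "triF F1 a1 b1 c1" using triE[OF Ff(1)] by blast
  then obtain w1 where w1: "triF F1 u v w1" using tri_at_edge Fe(1) by blast
  obtain a2 b2 c2 where "triF F2 a2 b2 c2" using triE[OF Ff(2)] by blast
  then obtain w2 where w2: "triF F2 u v w2" using tri_at_edge Fe(2) by blast
  show False
  proof (cases "w1 = w2")
    case True
    then show False using side_faces[OF Ff F(4,5,6) w1] w2 by blast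
  next
    case False
    then show False using theta_faces[OF Ff F(4,5,6) w1 w2 False Fe(3)] by blast
  qed
qed

lemma faces_ne: "faces V E pos arc_of \<noteq> {}"
proof -
  have "bounded (DS E)" using compact_DS[of E] compact_imp_bounded by blast
  then have "DS E \<noteq> UNIV" using not_bounded_UNIV by metis
  then have "- DS E \<noteq> {}" by auto
  then obtain x where "x \<in> - DS E" by blast
  then have "connected_component_set (- DS E) x \<in> components (- DS E)" by (simp add: componentsI)
  then show ?thesis unfolding faces_DS by blast
qed

lemma card_V3: "3 \<le> card V"
proof -
  obtain F where F: "F \<in> faces V E pos arc_of" using faces_ne by blast
  then obtain a b c where t: "triF F a b c" by (rule triE)
  note tp = triF_parts[OF t]
  have abc: "{a, b, c} \<subseteq> V" using edge_uv tp(4,5) by auto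
  have "card {a, b, c} = 3" using tp(1,2,3) by simp
  then show ?thesis using card_mono[OF finV abc] by simp
qed

lemma euler_final: "card E + 2 \<le> card (faces V E pos arc_of) + card V"
proof -
  obtain K where K: "K \<subseteq> components (- DS E)" "finite K" "card E + card (cls V E) + 1 \<le> card K + card V"
    using euler_lb[of E] by blast
  have "card K \<le> card (faces V E pos arc_of)" using K(1) faces_finite card_mono unfolding faces_DS by blast
  moreover have "V \<noteq> {}" using card_V3 by auto
  then have "cls V E \<noteq> {}" unfolding cls_def by blast
  then have "1 \<le> card (cls V E)" using finV unfolding cls_def by (simp add: Suc_leI card_gt_0_iff)
  ultimately show ?thesis using K(3) by linarith
qed

lemma count_all: "3 * card (faces V E pos arc_of) \<le> 2 * card E"
proof -
  let ?Fs = "faces V E pos arc_of"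
  have "(\<Sum>F\<in>?Fs. card {e \<in> E. e \<in> edgesF F}) = (\<Sum>e\<in>E. card {F \<in> ?Fs. e \<in> edgesF F})"
    by (rule double_count[OF faces_finite finE])
  moreover have "(\<Sum>F\<in>?Fs. card {e \<in> E. e \<in> edgesF F}) = (\<Sum>F\<in>?Fs. 3)"
  proof (rule sum.cong[OF refl])
    fix F assume F: "F \<in> ?Fs"
    obtain a b c where t: "triF F a b c" using triE[OF F] by blast
    have "{e \<in> E. e \<in> edgesF F} = edgesF F" unfolding edgesF_def by blast
    then show "card {e \<in> E. e \<in> edgesF F} = 3" using card_edgesF[OF t] by simp
  qed
  moreover have "(\<Sum>e\<in>E. card {F \<in> ?Fs. e \<in> edgesF F}) \<le> (\<Sum>e\<in>E. 2)"
    by (rule sum_mono) (rule le2)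
  ultimately show ?thesis by simp
qed

lemma count_out:
  assumes indep: "independent_set E I"
  shows "card (faces V E pos arc_of) \<le> 2 * card {e \<in> E. e \<inter> I = {}}"
proof -
  let ?Fs = "faces V E pos arc_of" let ?EO = "{e \<in> E. e \<inter> I = {}}"
  have finEO: "finite ?EO" using finE by simp
  have "(\<Sum>F\<in>?Fs. card {e \<in> ?EO. e \<in> edgesF F}) = (\<Sum>e\<in>?EO. card {F \<in> ?Fs. e \<in> edgesF F})"
    by (rule double_count[OF faces_finite finEO])
  moreover have "(\<Sum>F\<in>?Fs. 1) \<le> (\<Sum>F\<in>?Fs. card {e \<in> ?EO. e \<in> edgesF F})"
  proof (rule sum_mono)
    fix F assume F: "F \<in> ?Fs"
    obtain a b c where t: "triF F a b c" using triE[OF F] by blast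
    note tp = triF_parts[OF t]
    have ed: "edgesF F = {{a, b}, {b, c}, {a, c}}" by (rule edgesF_eq[OF t])
    have nab: "\<not> (a \<in> I \<and> b \<in> I)" "\<not> (b \<in> I \<and> c \<in> I)" "\<not> (a \<in> I \<and> c \<in> I)"
      using indep tp(4,5,6) unfolding independent_set_def adjacent_def by blast+
    have "\<exists>e. e \<in> ?EO \<and> e \<in> edgesF F"
    proof (cases "a \<in> I")
      case True
      then have "{b, c} \<in> ?EO" using nab tp(5) by auto
      then show ?thesis using ed by blast
    next
      case False
      show ?thesis
      proof (cases "b \<in> I")
        case True
        then have "{a, c} \<in> ?EO" using nab tp(6) False by auto
        then show ?thesis using ed by blast
      next
        case False2: False
        then have "{a, b} \<in> ?EO" using False tp(4) by auto
        then show ?thesis using ed by blast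
      qed
    qed
    then have "{e \<in> ?EO. e \<in> edgesF F} \<noteq> {}" by blast
    moreover have "finite {e \<in> ?EO. e \<in> edgesF F}" using finE by simp
    ultimately show "1 \<le> card {e \<in> ?EO. e \<in> edgesF F}" by (simp add: Suc_leI card_gt_0_iff)
  qed
  moreover have "(\<Sum>e\<in>?EO. card {F \<in> ?Fs. e \<in> edgesF F}) \<le> (\<Sum>e\<in>?EO. 2)"
    by (rule sum_mono) (rule le2, simp)
  ultimately show ?thesis by simp
qed

lemma count_in:
  assumes I: "I \<subseteq> V" and indep: "independent_set E I" and deg: "\<forall>v\<in>I. degree V E v \<ge> 6"
  shows "6 * card I \<le> card {e \<in> E. e \<inter> I \<noteq> {}}"
proof -
  define N where "N v = {u \<in> V. adjacent E v u}" for v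
  define S where "S v = (\<lambda>u. {v, u}) ` N v" for v
  have finI: "finite I" using I finV finite_subset by blast
  have finS: "finite (S v)" for v unfolding S_def N_def using finV by simp
  have cardS: "card (S v) = degree V E v" for v
  proof -
    have "inj_on (\<lambda>u. {v, u}) (N v)"
      by (rule inj_onI) (auto simp: doubleton_eq_iff)
    then show ?thesis unfolding S_def Defs.degree_def N_def by (simp add: card_image)
  qed
  have disj: "S v \<inter> S v' = {}" if "v \<in> I" "v' \<in> I" "v \<noteq> v'" for v v'
  proof (rule ccontr)
    assume "S v \<inter> S v' \<noteq> {}"
    then obtain u u' where uu: "u \<in> N v" "u' \<in> N v'" "{v, u} = {v', u'}" unfolding S_def by blast
    then have "v = u'" using that(3) by (auto simp: doubleton_eq_iff)
    moreover have "{v', u'} \<in> E" using uu(2) unfolding N_def adjacent_def by blast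
    ultimately have "adjacent E v' v" unfolding adjacent_def by simp
    then show False using indep that unfolding independent_set_def by blast
  qed
  have sub: "(\<Union>v\<in>I. S v) \<subseteq> {e \<in> E. e \<inter> I \<noteq> {}}"
    unfolding S_def N_def adjacent_def by blast
  have "card (\<Union>v\<in>I. S v) = (\<Sum>v\<in>I. card (S v))"
    by (rule card_UN_disjoint[OF finI]) (use finS disj in auto)
  also have "\<dots> = (\<Sum>v\<in>I. degree V E v)" using cardS by simp
  also have "\<dots> \<ge> (\<Sum>v\<in>I. 6)" using deg by (intro sum_mono) auto
  finally have "6 * card I \<le> card (\<Union>v\<in>I. S v)" by simp
  also have "\<dots> \<le> card {e \<in> E. e \<inter> I \<noteq> {}}" using sub finE by (intro card_mono) auto
  finally show ?thesis .
qed

lemma final_bound: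
  assumes I: "I \<subseteq> V" and indep: "independent_set E I" and deg: "\<forall>v\<in>I. degree V E v \<ge> 6"
  shows "3 * card I + 2 \<le> card V"
proof -
  let ?EO = "{e \<in> E. e \<inter> I = {}}" let ?EI = "{e \<in> E. e \<inter> I \<noteq> {}}"
  have split: "card ?EI + card ?EO = card E"
  proof -
    have "?EI \<union> ?EO = E" "?EI \<inter> ?EO = {}" by blast+
    then show ?thesis using finE card_Un_disjoint[of ?EI ?EO] by simp
  qed
  have a: "card E + 2 \<le> card (faces V E pos arc_of) + card V" by (rule euler_final)
  have b: "3 * card (faces V E pos arc_of) \<le> 2 * card E" by (rule count_all)
  have c: "card (faces V E pos arc_of) \<le> 2 * card ?EO" by (rule count_out[OF indep])
  have d: "6 * card I \<le> card ?EI" by (rule count_in[OF I indep deg])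
  show ?thesis using a b c d split by linarith
qed

end

theorem mainTheorem2:
  fixes V :: "'a set" and E :: "'a set set" and I :: "'a set"
  assumes "triangulation V E"
    and "I \<subseteq> V"
    and "independent_set E I"
    and "\<forall>v\<in>I. degree V E v \<ge> 6"
  shows "real (card I) \<le> (real (card V) - 2) / 3"
proof -
  have sg: "simple_graph V E" and ex: "\<exists>pos arc_of. plane_embedding V E pos arc_of \<and>
        (\<forall>F\<in>faces V E pos arc_of. \<exists>a b c.
           a \<noteq> b \<and> b \<noteq> c \<and> a \<noteq> c \<and>
           {a, b} \<in> E \<and> {b, c} \<in> E \<and> {a, c} \<in> E \<and>
           frontier F = path_image (arc_of {a, b}) \<union> path_image (arc_of {b, c})
                          \<union> path_image (arc_of {a, c}))"
    using assms(1) unfolding triangulation_def by auto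
  obtain pos arc_of where pe: "plane_embedding V E pos arc_of" and tr: "\<forall>F\<in>faces V E pos arc_of. \<exists>a b c.
           a \<noteq> b \<and> b \<noteq> c \<and> a \<noteq> c \<and>
           {a, b} \<in> E \<and> {b, c} \<in> E \<and> {a, c} \<in> E \<and>
           frontier F = path_image (arc_of {a, b}) \<union> path_image (arc_of {b, c})
                          \<union> path_image (arc_of {a, c})"
    using ex by blast
  have fin: "finite V" and ed: "\<And>e. e \<in> E \<Longrightarrow> \<exists>u v. u \<in> V \<and> v \<in> V \<and> u \<noteq> v \<and> e = {u, v}"
    using sg unfolding simple_graph_def by auto
  interpret T: tri V E pos arc_of
  proof (unfold_locales)
    show "finite V" by (rule fin)
    show "\<And>e. e \<in> E \<Longrightarrow> \<exists>u v. u \<in> V \<and> v \<in> V \<and> u \<noteq> v \<and> e = {u, v}" by (rule ed)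
    show "plane_embedding V E pos arc_of" by (rule pe)
    fix F assume "F \<in> faces V E pos arc_of"
    then show "\<exists>a b c. a \<noteq> b \<and> b \<noteq> c \<and> a \<noteq> c \<and>
     {a, b} \<in> E \<and> {b, c} \<in> E \<and> {a, c} \<in> E \<and>
     frontier F = path_image (arc_of {a, b}) \<union> path_image (arc_of {b, c}) \<union> path_image (arc_of {a, c})"
      using tr by blast
  qed
  have "3 * card I + 2 \<le> card V" by (rule T.final_bound[OF assms(2,3,4)])
  then have "real (3 * card I + 2) \<le> real (card V)" by (simp only: of_nat_le_iff)
  then show ?thesis by simp
qed

end
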